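(* Let $(X,b,m)$ be a weighted graph satisfying (C), (B), (M), and let $D\subsetneq X$ be $d_L$-relatively dense. Then the linear control problem $(H,D)$ (with $r=2$) is closed-loop stabilizable: there exists a bounded linear operator $F\colon\ell_2(X,m)\to\ell_2(D,m|_D)$ such that $-H+\mathbf 1_DF$ generates a $C_0$-semigroup $(S^F_t)_{t\ge0}$ with $\|S^F_t\|\le Me^{\omega t}$ for all $t\ge0$, for some $M\ge1$, $\omega<0$.
   Context: Weighted graph $(X,b,m)$: $X$ countable, $m\colon X\to(0,\infty)$, $b$ symmetric non-negative with $b(x,x)=0$ and $\sum_yb(x,y)<\infty$. (C) connected via paths $(x_0,\dots,x_k)$ with $b(x_j,x_{j+1})>0$; (B) $\sup_x\frac1{m(x)}\sum_yb(x,y)<\infty$; (M) $\sup_xm(x)<\infty$. Length metric $d_L(x,y)=\inf\{\sum_j1/b(x_j,x_{j+1})\}$ over paths from $x$ to $y$; $D$ is $d_L$-relatively dense if $\inf\{R>0:\bigcup_{x\in D}\{y:d_L(x,y)\le R\}=X\}<\infty$. $H$ is the weighted Laplacian $Hf(x)=\frac1{m(x)}\sum_yb(x,y)(f(x)-f(y))$ on $\ell_2(X,m)$; $\mathbf 1_D\colon\ell_2(D,m|_D)\to\ell_2(X,m)$ is extension by zero; the control problem $(H,D)$ is $\dot f=-Hf+\mathbf 1_Du$. *)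

theory Defs
  imports "HOL-Analysis.Analysis"
begin

definition weighted_graph :: "('x \<Rightarrow> 'x \<Rightarrow> real) \<Rightarrow> ('x \<Rightarrow> real) \<Rightarrow> bool" where
  "weighted_graph b m \<longleftrightarrow>
     (\<forall>x. m x > 0) \<and> (\<forall>x y. b x y = b y x) \<and> (\<forall>x y. b x y \<ge> 0) \<and>
     (\<forall>x. b x x = 0) \<and> (\<forall>x. (b x) summable_on UNIV)"

definition graph_path :: "('x \<Rightarrow> 'x \<Rightarrow> real) \<Rightarrow> 'x list \<Rightarrow> 'x \<Rightarrow> 'x \<Rightarrow> bool" where
  "graph_path b p x y \<longleftrightarrow> p \<noteq> [] \<and> hd p = x \<and> last p = y \<and>
     (\<forall>j. Suc j < length p \<longrightarrow> b (p ! j) (p ! Suc j) > 0)"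

definition connected_graph :: "('x \<Rightarrow> 'x \<Rightarrow> real) \<Rightarrow> bool" where
  "connected_graph b \<longleftrightarrow> (\<forall>x y. \<exists>p. graph_path b p x y)"

definition bounded_degree :: "('x \<Rightarrow> 'x \<Rightarrow> real) \<Rightarrow> ('x \<Rightarrow> real) \<Rightarrow> bool" where
  "bounded_degree b m \<longleftrightarrow> (\<exists>C. \<forall>x. (1 / m x) * (\<Sum>\<^sub>\<infinity>y. b x y) \<le> C)"

definition bounded_measure :: "('x \<Rightarrow> real) \<Rightarrow> bool" where
  "bounded_measure m \<longleftrightarrow> (\<exists>C. \<forall>x. m x \<le> C)"

definition path_length :: "('x \<Rightarrow> 'x \<Rightarrow> real) \<Rightarrow> 'x list \<Rightarrow> real" where
  "path_length b p = (\<Sum>j<length p - 1. 1 / b (p ! j) (p ! Suc j))"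

definition dL :: "('x \<Rightarrow> 'x \<Rightarrow> real) \<Rightarrow> 'x \<Rightarrow> 'x \<Rightarrow> real" where
  "dL b x y = Inf {path_length b p | p. graph_path b p x y}"

text \<open>D is d_L-relatively dense: the set of admissible radii R is nonempty
  (equivalently, its infimum is finite).\<close>
definition relatively_dense :: "('x \<Rightarrow> 'x \<Rightarrow> real) \<Rightarrow> 'x set \<Rightarrow> bool" where
  "relatively_dense b D \<longleftrightarrow>
     {R. R > 0 \<and> (\<Union>x\<in>D. {y. dL b x y \<le> R}) = UNIV} \<noteq> {}"

text \<open>l2(S, m|_S), realised as functions vanishing outside S.\<close>
definition l2 :: "'x set \<Rightarrow> ('x \<Rightarrow> real) \<Rightarrow> ('x \<Rightarrow> real) set" where
  "l2 S m = {f. (\<forall>x. x \<notin> S \<longrightarrow> f x = 0) \<and> (\<lambda>x. m x * (f x)\<^sup>2) summable_on S}"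

definition l2norm :: "'x set \<Rightarrow> ('x \<Rightarrow> real) \<Rightarrow> ('x \<Rightarrow> real) \<Rightarrow> real" where
  "l2norm S m f = sqrt (\<Sum>\<^sub>\<infinity>x\<in>S. m x * (f x)\<^sup>2)"

definition bounded_linear_op ::
  "'x set \<Rightarrow> 'x set \<Rightarrow> ('x \<Rightarrow> real) \<Rightarrow> (('x \<Rightarrow> real) \<Rightarrow> ('x \<Rightarrow> real)) \<Rightarrow> bool" where
  "bounded_linear_op S T m F \<longleftrightarrow>
     (\<forall>f\<in>l2 S m. F f \<in> l2 T m) \<and>
     (\<forall>f\<in>l2 S m. \<forall>g\<in>l2 S m. \<forall>a::real. F (\<lambda>x. a * f x + g x) = (\<lambda>x. a * F f x + F g x)) \<and>
     (\<exists>C. \<forall>f\<in>l2 S m. l2norm T m (F f) \<le> C * l2norm S m f)"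

definition ext_zero :: "'x set \<Rightarrow> ('x \<Rightarrow> real) \<Rightarrow> ('x \<Rightarrow> real)" where
  "ext_zero D u = (\<lambda>x. if x \<in> D then u x else 0)"

definition laplacian :: "('x \<Rightarrow> 'x \<Rightarrow> real) \<Rightarrow> ('x \<Rightarrow> real) \<Rightarrow> ('x \<Rightarrow> real) \<Rightarrow> ('x \<Rightarrow> real)" where
  "laplacian b m f = (\<lambda>x. (1 / m x) * (\<Sum>\<^sub>\<infinity>y. b x y * (f x - f y)))"

definition C0_semigroup :: "('x \<Rightarrow> real) \<Rightarrow> (real \<Rightarrow> ('x \<Rightarrow> real) \<Rightarrow> ('x \<Rightarrow> real)) \<Rightarrow> bool" where
  "C0_semigroup m S \<longleftrightarrow>
     (\<forall>t\<ge>0. bounded_linear_op UNIV UNIV m (S t)) \<and>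
     (\<forall>f\<in>l2 UNIV m. S 0 f = f) \<and>
     (\<forall>t\<ge>0. \<forall>s\<ge>0. \<forall>f\<in>l2 UNIV m. S (t + s) f = S t (S s f)) \<and>
     (\<forall>f\<in>l2 UNIV m. ((\<lambda>t. l2norm UNIV m (\<lambda>x. S t f x - f x)) \<longlongrightarrow> 0) (at_right 0))"

text \<open>The (everywhere defined) operator A generates S: S is a C_0-semigroup whose generator
  (defined as the strong limit of (S t f - f)/t as t \<rightarrow> 0+, with domain the set of f for which
  this limit exists) has domain all of l2(X,m) and coincides with A.\<close>
definition generates :: "('x \<Rightarrow> real) \<Rightarrow> (('x \<Rightarrow> real) \<Rightarrow> ('x \<Rightarrow> real)) \<Rightarrow>
    (real \<Rightarrow> ('x \<Rightarrow> real) \<Rightarrow> ('x \<Rightarrow> real)) \<Rightarrow> bool" where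
  "generates m A S \<longleftrightarrow> C0_semigroup m S \<and>
     (\<forall>f\<in>l2 UNIV m. ((\<lambda>t. l2norm UNIV m (\<lambda>x. (S t f x - f x) / t - A f x)) \<longlongrightarrow> 0) (at_right 0))"

end

theory Submission
  imports Defs
begin

lemma sq_summable_prod:
  fixes f g :: "'a \<Rightarrow> real"
  assumes "(\<lambda>x. (f x)\<^sup>2) summable_on A" "(\<lambda>x. (g x)\<^sup>2) summable_on A"
  shows "(\<lambda>x. f x * g x) summable_on A"
proof -
  have "(\<lambda>x. (f x)\<^sup>2 + (g x)\<^sup>2) summable_on A"
    using assms by (rule summable_on_add)
  then have "(\<lambda>x. \<bar>f x * g x\<bar>) summable_on A"
  proof (rule summable_on_comparison_test)
    fix x show "\<bar>f x * g x\<bar> \<le> (f x)\<^sup>2 + (g x)\<^sup>2"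
    proof -
      have "2 * \<bar>f x\<bar> * \<bar>g x\<bar> \<le> (f x)\<^sup>2 + (g x)\<^sup>2"
        using sum_squares_bound[of "\<bar>f x\<bar>" "\<bar>g x\<bar>"] by simp
      moreover have "0 \<le> \<bar>f x\<bar> * \<bar>g x\<bar>" by simp
      ultimately have "\<bar>f x\<bar> * \<bar>g x\<bar> \<le> (f x)\<^sup>2 + (g x)\<^sup>2" by linarith
      then show ?thesis by (simp add: abs_mult)
    qed
  qed simp
  then show ?thesis
    using summable_on_iff_abs_summable_on_real[of "\<lambda>x. f x * g x" A] by simp
qed

lemma sq_summable_add:
  fixes f g :: "'a \<Rightarrow> real"
  assumes "(\<lambda>x. (f x)\<^sup>2) summable_on A" "(\<lambda>x. (g x)\<^sup>2) summable_on A"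
  shows "(\<lambda>x. (f x + g x)\<^sup>2) summable_on A"
proof -
  have "(\<lambda>x. (f x)\<^sup>2 + 2 * (f x * g x) + (g x)\<^sup>2) summable_on A"
    by (intro summable_on_add summable_on_cmult_right sq_summable_prod assms)
  moreover have "\<And>x. (f x + g x)\<^sup>2 = (f x)\<^sup>2 + 2 * (f x * g x) + (g x)\<^sup>2"
    by (simp add: power2_sum)
  ultimately show ?thesis by simp
qed

lemma sq_summable_scale:
  fixes f :: "'a \<Rightarrow> real"
  assumes "(\<lambda>x. (f x)\<^sup>2) summable_on A"
  shows "(\<lambda>x. (c * f x)\<^sup>2) summable_on A"
  using summable_on_cmult_right[OF assms, of "c^2"] by (simp add: power_mult_distrib)

typedef 'a ell2 = "{f::'a \<Rightarrow> real. (\<lambda>x. (f x)\<^sup>2) summable_on UNIV}"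
  morphisms ell2_fun Ell2
  by (rule exI[of _ "\<lambda>_. 0"]) auto

setup_lifting type_definition_ell2

instantiation ell2 :: (type) real_inner
begin
lift_definition zero_ell2 :: "'a ell2" is "\<lambda>_. 0" by simp
lift_definition plus_ell2 :: "'a ell2 \<Rightarrow> 'a ell2 \<Rightarrow> 'a ell2" is "\<lambda>f g x. f x + g x"
  by (simp add: sq_summable_add)
lift_definition uminus_ell2 :: "'a ell2 \<Rightarrow> 'a ell2" is "\<lambda>f x. - f x"
  by simp
lift_definition minus_ell2 :: "'a ell2 \<Rightarrow> 'a ell2 \<Rightarrow> 'a ell2" is "\<lambda>f g x. f x - g x"
  using sq_summable_add[where g="\<lambda>x. - g x" for g] by simp
lift_definition scaleR_ell2 :: "real \<Rightarrow> 'a ell2 \<Rightarrow> 'a ell2" is "\<lambda>c f x. c * f x"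
  by (simp add: sq_summable_scale)
lift_definition inner_ell2 :: "'a ell2 \<Rightarrow> 'a ell2 \<Rightarrow> real" is "\<lambda>f g. \<Sum>\<^sub>\<infinity>x. f x * g x" .
definition norm_ell2 :: "'a ell2 \<Rightarrow> real" where "norm_ell2 x = sqrt (inner x x)"
definition sgn_ell2 :: "'a ell2 \<Rightarrow> 'a ell2" where "sgn_ell2 x = inverse (norm x) *\<^sub>R x"
definition dist_ell2 :: "'a ell2 \<Rightarrow> 'a ell2 \<Rightarrow> real" where "dist_ell2 x y = norm (x - y)"
definition uniformity_ell2 :: "('a ell2 \<times> 'a ell2) filter"
  where "uniformity_ell2 = (INF e\<in>{0<..}. principal {(x, y). dist x y < e})"
definition open_ell2 :: "'a ell2 set \<Rightarrow> bool"
  where "open_ell2 U = (\<forall>x\<in>U. \<forall>\<^sub>F (x', y) in uniformity. x' = x \<longrightarrow> y \<in> U)"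
instance
proof
  fix x y z :: "'a ell2" and a b :: real
  show "a *\<^sub>R (x + y) = a *\<^sub>R x + a *\<^sub>R y"
    by transfer (simp add: algebra_simps)
  show "(a + b) *\<^sub>R x = a *\<^sub>R x + b *\<^sub>R x"
    by transfer (simp add: algebra_simps)
  show "a *\<^sub>R b *\<^sub>R x = (a * b) *\<^sub>R x"
    by transfer (simp add: algebra_simps)
  show "1 *\<^sub>R x = x"
    by transfer simp
  show "x + y + z = x + (y + z)" by transfer (simp add: algebra_simps)
  show "x + y = y + x" by transfer (simp add: algebra_simps)
  show "0 + x = x" by transfer simp
  show "- x + x = 0" by transfer simp
  show "x - y = x + - y" by transfer simp
  show "dist x y = norm (x - y)" by (simp add: dist_ell2_def)
  show "uniformity = (INF e\<in>{0<..}. principal {(x::'a ell2, y). dist x y < e})"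
    by (simp add: uniformity_ell2_def)
  show "\<And>U. open U \<longleftrightarrow> (\<forall>x\<in>U. \<forall>\<^sub>F (x', y) in uniformity. x' = (x::'a ell2) \<longrightarrow> y \<in> U)"
    by (simp add: open_ell2_def)
  show "inner x y = inner y x" by transfer (simp add: mult.commute)
  show "inner (x + y) z = inner x z + inner y z"
  proof transfer
    fix f g h :: "'a \<Rightarrow> real"
    assume f: "(\<lambda>x. (f x)\<^sup>2) summable_on UNIV" and g: "(\<lambda>x. (g x)\<^sup>2) summable_on UNIV"
      and h: "(\<lambda>x. (h x)\<^sup>2) summable_on UNIV"
    have "(\<Sum>\<^sub>\<infinity>x. (f x + g x) * h x) = (\<Sum>\<^sub>\<infinity>x. f x * h x + g x * h x)"
      by (simp add: distrib_right)
    also have "\<dots> = (\<Sum>\<^sub>\<infinity>x. f x * h x) + (\<Sum>\<^sub>\<infinity>x. g x * h x)"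
      by (rule infsum_add[OF sq_summable_prod[OF f h] sq_summable_prod[OF g h]])
    finally show "(\<Sum>\<^sub>\<infinity>x. (f x + g x) * h x) = (\<Sum>\<^sub>\<infinity>x. f x * h x) + (\<Sum>\<^sub>\<infinity>x. g x * h x)" .
  qed
  show "inner (a *\<^sub>R x) y = a * inner x y"
    by transfer (simp add: mult.assoc infsum_cmult_right')
  show "0 \<le> inner x x"
  proof transfer
    fix f :: "'a \<Rightarrow> real"
    show "0 \<le> (\<Sum>\<^sub>\<infinity>x. f x * f x)" by (rule infsum_nonneg) simp
  qed
  show "inner x x = 0 \<longleftrightarrow> x = 0"
  proof
    assume "inner x x = 0"
    then have h: "(\<Sum>\<^sub>\<infinity>i. ell2_fun x i * ell2_fun x i) = 0" by (simp add: inner_ell2_def)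
    have s: "(\<lambda>i. ell2_fun x i * ell2_fun x i) summable_on UNIV"
      using ell2_fun[of x] by (simp add: power2_eq_square)
    have z: "ell2_fun x i * ell2_fun x i = 0" for i
      by (rule nonneg_infsum_le_0D[where f="\<lambda>i. ell2_fun x i * ell2_fun x i" and A=UNIV])
        (use h s in simp_all)
    have "ell2_fun x = ell2_fun 0"
    proof
      fix i show "ell2_fun x i = ell2_fun 0 i" using z[of i] by (simp add: zero_ell2.rep_eq)
    qed
    then show "x = 0" by (simp add: ell2_fun_inject)
  next
    assume "x = 0" then show "inner x x = 0" by (simp add: inner_ell2_def zero_ell2.rep_eq)
  qed
  show "norm x = sqrt (inner x x)" by (simp add: norm_ell2_def)
qed (rule sgn_ell2_def)
end

lemma inner_ell2_eq: "inner x y = (\<Sum>\<^sub>\<infinity>i. ell2_fun x i * ell2_fun y i)"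
  by transfer simp

lemma norm_ell2_eq: "norm x = sqrt (\<Sum>\<^sub>\<infinity>i. (ell2_fun x i)\<^sup>2)"
  by (simp add: norm_ell2_def inner_ell2_eq power2_eq_square)

lemma ell2_summable_UNIV: "(\<lambda>i. (ell2_fun x i)\<^sup>2) summable_on UNIV"
  using ell2_fun[of x] by simp

lemma ell2_summable: "(\<lambda>i. (ell2_fun x i)\<^sup>2) summable_on A"
  by (rule summable_on_subset[OF ell2_summable_UNIV subset_UNIV])

lemma ell2_minus_apply: "ell2_fun (x - y) i = ell2_fun x i - ell2_fun y i"
  by (simp add: minus_ell2.rep_eq)
lemma ell2_plus_apply: "ell2_fun (x + y) i = ell2_fun x i + ell2_fun y i"
  by (simp add: plus_ell2.rep_eq)
lemma ell2_scaleR_apply: "ell2_fun (c *\<^sub>R x) i = c * ell2_fun x i"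
  by (simp add: scaleR_ell2.rep_eq)
lemma ell2_zero_apply: "ell2_fun 0 i = 0"
  by (simp add: zero_ell2.rep_eq)

lemma norm_sq_ell2: "(norm x)\<^sup>2 = (\<Sum>\<^sub>\<infinity>i. (ell2_fun x i)\<^sup>2)"
  unfolding norm_ell2_eq by (simp add: infsum_nonneg)

lemma finite_sum_le_norm_sq: "finite F \<Longrightarrow> (\<Sum>i\<in>F. (ell2_fun x i)\<^sup>2) \<le> (norm x)\<^sup>2"
  unfolding norm_sq_ell2 by (rule finite_sum_le_infsum[OF ell2_summable_UNIV]) auto

lemma coord_le_norm: "\<bar>ell2_fun x i\<bar> \<le> norm x"
proof -
  have "(ell2_fun x i)\<^sup>2 \<le> (norm x)\<^sup>2"
    using finite_sum_le_norm_sq[of "{i}" x] by simp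
  then show ?thesis
    using abs_le_square_iff[of "ell2_fun x i" "norm x"] by simp
qed

instance ell2 :: (type) banach
proof
  fix X :: "nat \<Rightarrow> 'a ell2" assume C: "Cauchy X"
  have CI: "\<exists>N. \<forall>n\<ge>N. \<forall>k\<ge>N. norm (X n - X k) < e" if "e > 0" for e
    using C that unfolding Cauchy_def dist_norm by blast
  have "convergent (\<lambda>n. ell2_fun (X n) i)" for i
  proof -
    have "Cauchy (\<lambda>n. ell2_fun (X n) i)"
    proof (rule metric_CauchyI)
      fix e :: real assume "e > 0"
      then obtain N where N: "\<forall>n\<ge>N. \<forall>k\<ge>N. norm (X n - X k) < e" using CI by blast
      show "\<exists>M. \<forall>m\<ge>M. \<forall>n\<ge>M. dist (ell2_fun (X m) i) (ell2_fun (X n) i) < e"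
      proof (intro exI allI impI)
        fix n k assume "N \<le> n" "N \<le> k"
        then have "norm (X n - X k) < e" using N by blast
        moreover have "\<bar>ell2_fun (X n - X k) i\<bar> \<le> norm (X n - X k)" by (rule coord_le_norm)
        ultimately show "dist (ell2_fun (X n) i) (ell2_fun (X k) i) < e"
          by (simp add: dist_real_def ell2_minus_apply)
      qed
    qed
    then show ?thesis by (simp add: Cauchy_convergent_iff)
  qed
  then obtain g where g: "\<And>i. (\<lambda>n. ell2_fun (X n) i) \<longlonglongrightarrow> g i"
    unfolding convergent_def by metis
  have key: "\<exists>N. \<forall>n\<ge>N. (\<lambda>i. (ell2_fun (X n) i - g i)\<^sup>2) summable_on UNIV \<and>
      (\<Sum>\<^sub>\<infinity>i. (ell2_fun (X n) i - g i)\<^sup>2) \<le> e\<^sup>2" if "e > 0" for e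
  proof -
    obtain N where N: "\<forall>n\<ge>N. \<forall>k\<ge>N. norm (X n - X k) < e" using CI \<open>e > 0\<close> by blast
    have fin: "(\<Sum>i\<in>F. (ell2_fun (X n) i - g i)\<^sup>2) \<le> e\<^sup>2" if "n \<ge> N" "finite F" for n F
    proof -
      have lim: "(\<lambda>k. \<Sum>i\<in>F. (ell2_fun (X n) i - ell2_fun (X k) i)\<^sup>2)
          \<longlonglongrightarrow> (\<Sum>i\<in>F. (ell2_fun (X n) i - g i)\<^sup>2)"
        by (intro tendsto_intros g)
      show ?thesis
      proof (rule LIMSEQ_le_const2[OF lim], intro exI allI impI)
        fix k assume "k \<ge> N"
        have "(\<Sum>i\<in>F. (ell2_fun (X n) i - ell2_fun (X k) i)\<^sup>2) \<le> (norm (X n - X k))\<^sup>2"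
          using finite_sum_le_norm_sq[OF \<open>finite F\<close>, of "X n - X k"] by (simp add: ell2_minus_apply)
        also have "\<dots> \<le> e\<^sup>2"
          using N \<open>k \<ge> N\<close> \<open>n \<ge> N\<close> by (intro power_mono) (auto intro: less_imp_le)
        finally show "(\<Sum>i\<in>F. (ell2_fun (X n) i - ell2_fun (X k) i)\<^sup>2) \<le> e\<^sup>2" .
      qed
    qed
    show ?thesis
    proof (intro exI allI impI conjI)
      fix n assume "n \<ge> N"
      show s: "(\<lambda>i. (ell2_fun (X n) i - g i)\<^sup>2) summable_on UNIV"
        by (rule nonneg_bdd_above_summable_on) (use fin \<open>n \<ge> N\<close> in \<open>auto intro!: bdd_aboveI\<close>)
      show "(\<Sum>\<^sub>\<infinity>i. (ell2_fun (X n) i - g i)\<^sup>2) \<le> e\<^sup>2"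
        by (rule infsum_le_finite_sums[OF s]) (use fin \<open>n \<ge> N\<close> in auto)
    qed
  qed
  obtain N1 where N1: "\<forall>n\<ge>N1. (\<lambda>i. (ell2_fun (X n) i - g i)\<^sup>2) summable_on UNIV"
    using key[of 1] by auto
  have gs: "(\<lambda>i. (g i)\<^sup>2) summable_on UNIV"
  proof -
    have "(\<lambda>i. (ell2_fun (X N1) i + - (ell2_fun (X N1) i - g i))\<^sup>2) summable_on UNIV"
      by (rule sq_summable_add[OF ell2_summable_UNIV]) (use N1 in \<open>simp add: power2_commute\<close>)
    then show ?thesis by simp
  qed
  have rep: "ell2_fun (X n - Ell2 g) i = ell2_fun (X n) i - g i" for n i
    using gs by (simp add: ell2_minus_apply Ell2_inverse)
  have "X \<longlonglongrightarrow> Ell2 g"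
  proof (rule metric_LIMSEQ_I)
    fix e :: real assume "e > 0"
    then obtain N where N: "\<forall>n\<ge>N. (\<lambda>i. (ell2_fun (X n) i - g i)\<^sup>2) summable_on UNIV \<and>
      (\<Sum>\<^sub>\<infinity>i. (ell2_fun (X n) i - g i)\<^sup>2) \<le> (e/2)\<^sup>2"
      using key[of "e/2"] by auto
    show "\<exists>N. \<forall>n\<ge>N. dist (X n) (Ell2 g) < e"
    proof (intro exI allI impI)
      fix n assume "n \<ge> N"
      have "(norm (X n - Ell2 g))\<^sup>2 \<le> (e/2)\<^sup>2"
        using N \<open>n \<ge> N\<close> by (simp add: norm_sq_ell2 rep)
      then have "norm (X n - Ell2 g) \<le> e/2"
        using \<open>e > 0\<close> by (simp add: power2_le_iff_abs_le)
      then show "dist (X n) (Ell2 g) < e" using \<open>e > 0\<close> by (simp add: dist_norm)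
    qed
  qed
  then show "convergent X" unfolding convergent_def by blast
qed

instance ell2 :: (type) perfect_space
proof
  fix x :: "'a ell2"
  obtain j :: 'a where True by blast
  define v where "v = Ell2 (\<lambda>i. if i = j then 1 else 0)"
  have vrep: "ell2_fun v = (\<lambda>i. if i = j then 1 else 0)"
  proof -
    have "(\<lambda>i. (if i = j then 1 else 0 :: real)\<^sup>2) summable_on UNIV"
    proof (rule summable_on_cong_neutral[THEN iffD1, of _ "{j}"])
      show "(\<lambda>i. (if i = j then 1 else 0 :: real)\<^sup>2) summable_on {j}" by simp
    qed auto
    then show ?thesis unfolding v_def by (simp add: Ell2_inverse)
  qed
  have nv: "norm v = 1"
  proof -
    have "(\<Sum>\<^sub>\<infinity>i. (ell2_fun v i)\<^sup>2) = (\<Sum>\<^sub>\<infinity>i\<in>{j}. (ell2_fun v i)\<^sup>2)"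
      by (rule infsum_cong_neutral) (auto simp: vrep)
    then show ?thesis by (simp add: norm_ell2_eq vrep)
  qed
  have "\<exists>y. norm (y - x) < e \<and> y \<noteq> x" if "e > 0" for e
  proof (intro exI conjI)
    show "norm ((x + (e/2) *\<^sub>R v) - x) < e" using that nv by simp
    show "x + (e/2) *\<^sub>R v \<noteq> x" using that nv by (metis add_cancel_left_right norm_zero scaleR_eq_0_iff zero_neq_one half_gt_zero_iff less_irrefl)
  qed
  then show "\<not> open {x}"
    by (clarsimp simp: open_dist dist_norm)
qed


typedef (overloaded) ('a::real_normed_vector) bop = "UNIV :: ('a \<Rightarrow>\<^sub>L 'a) set"
  morphisms bop_rep Bop by auto

setup_lifting type_definition_bop

instantiation bop :: (real_normed_vector) real_normed_vector
begin
lift_definition zero_bop :: "'a bop" is 0 .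
lift_definition plus_bop :: "'a bop \<Rightarrow> 'a bop \<Rightarrow> 'a bop" is "(+)" .
lift_definition minus_bop :: "'a bop \<Rightarrow> 'a bop \<Rightarrow> 'a bop" is "(-)" .
lift_definition uminus_bop :: "'a bop \<Rightarrow> 'a bop" is uminus .
lift_definition scaleR_bop :: "real \<Rightarrow> 'a bop \<Rightarrow> 'a bop" is scaleR .
lift_definition norm_bop :: "'a bop \<Rightarrow> real" is norm .
definition sgn_bop :: "'a bop \<Rightarrow> 'a bop" where "sgn_bop x = inverse (norm x) *\<^sub>R x"
definition dist_bop :: "'a bop \<Rightarrow> 'a bop \<Rightarrow> real" where "dist_bop x y = norm (x - y)"
definition uniformity_bop :: "('a bop \<times> 'a bop) filter"
  where "uniformity_bop = (INF e\<in>{0<..}. principal {(x, y). dist x y < e})"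
definition open_bop :: "'a bop set \<Rightarrow> bool"
  where "open_bop U = (\<forall>x\<in>U. \<forall>\<^sub>F (x', y) in uniformity. x' = x \<longrightarrow> y \<in> U)"
instance
proof
  fix x y z :: "'a bop" and a b :: real
  show "a *\<^sub>R (x + y) = a *\<^sub>R x + a *\<^sub>R y" by transfer (rule scaleR_add_right)
  show "(a + b) *\<^sub>R x = a *\<^sub>R x + b *\<^sub>R x" by transfer (rule scaleR_add_left)
  show "a *\<^sub>R b *\<^sub>R x = (a * b) *\<^sub>R x" by transfer (rule scaleR_scaleR)
  show "1 *\<^sub>R x = x" by transfer (rule scaleR_one)
  show "x + y + z = x + (y + z)" by transfer (rule add.assoc)
  show "x + y = y + x" by transfer (rule add.commute)
  show "0 + x = x" by transfer (rule add_0_left)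
  show "- x + x = 0" by transfer (rule left_minus)
  show "x - y = x + - y" by transfer (rule diff_conv_add_uminus)
  show "dist x y = norm (x - y)" by (simp add: dist_bop_def)
  show "uniformity = (INF e\<in>{0<..}. principal {(x::'a bop, y). dist x y < e})"
    by (simp add: uniformity_bop_def)
  show "\<And>U. open U \<longleftrightarrow> (\<forall>x\<in>U. \<forall>\<^sub>F (x', y) in uniformity. x' = (x::'a bop) \<longrightarrow> y \<in> U)"
    by (simp add: open_bop_def)
  show "norm x = 0 \<longleftrightarrow> x = 0" by transfer (rule norm_eq_zero)
  show "norm (x + y) \<le> norm x + norm y" by transfer (rule norm_triangle_ineq)
  show "norm (a *\<^sub>R x) = \<bar>a\<bar> * norm x" by transfer (rule norm_scaleR)
qed (rule sgn_bop_def)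
end

instantiation bop :: (real_normed_vector) "{times, one}"
begin
lift_definition times_bop :: "'a bop \<Rightarrow> 'a bop \<Rightarrow> 'a bop" is blinfun_compose .
lift_definition one_bop :: "'a bop" is id_blinfun .
instance ..
end

instance bop :: ("{real_normed_vector, perfect_space}") real_normed_algebra_1
proof
  fix x y z :: "'a bop" and a :: real
  show "x * y * z = x * (y * z)" by transfer (rule blinfun_eqI, simp)
  show "(x + y) * z = x * z + y * z" by transfer (rule blinfun_eqI, simp add: blinfun.bilinear_simps)
  show "x * (y + z) = x * y + x * z" by transfer (rule blinfun_eqI, simp add: blinfun.bilinear_simps)
  show "1 * x = x" by transfer (rule blinfun_eqI, simp)
  show "x * 1 = x" by transfer (rule blinfun_eqI, simp)
  show "(0::'a bop) \<noteq> 1"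
  proof transfer
    show "(0::'a \<Rightarrow>\<^sub>L 'a) \<noteq> id_blinfun"
    proof
      assume "(0::'a \<Rightarrow>\<^sub>L 'a) = id_blinfun"
      then have "norm (0::'a \<Rightarrow>\<^sub>L 'a) = norm (id_blinfun :: 'a \<Rightarrow>\<^sub>L 'a)" by simp
      then show False by simp
    qed
  qed
  show "a *\<^sub>R x * y = a *\<^sub>R (x * y)" by transfer (rule blinfun_eqI, simp add: blinfun.bilinear_simps)
  show "x * a *\<^sub>R y = a *\<^sub>R (x * y)" by transfer (rule blinfun_eqI, simp add: blinfun.bilinear_simps)
  show "norm (x * y) \<le> norm x * norm y" by transfer (rule norm_blinfun_compose)
  show "norm (1::'a bop) = 1" by transfer simp
qed

lemma norm_bop_rep: "norm (bop_rep x) = norm x"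
  by (simp add: norm_bop.rep_eq)

lemma bop_rep_minus: "bop_rep (x - y) = bop_rep x - bop_rep y"
  by (simp add: minus_bop.rep_eq)

instance bop :: ("{real_normed_vector, banach}") banach
proof
  fix X :: "nat \<Rightarrow> 'a bop" assume "Cauchy X"
  then have "Cauchy (\<lambda>n. bop_rep (X n))"
    unfolding Cauchy_def dist_norm by (simp add: norm_bop_rep[symmetric] bop_rep_minus)
  then obtain L where L: "(\<lambda>n. bop_rep (X n)) \<longlonglongrightarrow> L"
    using Cauchy_convergent_iff convergent_def by blast
  have "X \<longlonglongrightarrow> Bop L"
  proof (rule metric_LIMSEQ_I)
    fix e :: real assume "e > 0"
    with L obtain N where "\<forall>n\<ge>N. dist (bop_rep (X n)) L < e"
      using metric_LIMSEQ_D by blast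
    then show "\<exists>N. \<forall>n\<ge>N. dist (X n) (Bop L) < e"
      by (auto simp: dist_norm norm_bop_rep[symmetric] bop_rep_minus Bop_inverse)
  qed
  then show "convergent X" unfolding convergent_def by blast
qed

definition bapp :: "'a::real_normed_vector bop \<Rightarrow> 'a \<Rightarrow> 'a" where
  "bapp T x = blinfun_apply (bop_rep T) x"

lemma bapp_mult: "bapp (S * T) x = bapp S (bapp T x)"
  by (simp add: bapp_def times_bop.rep_eq)
lemma bapp_one: "bapp 1 x = x"
  by (simp add: bapp_def one_bop.rep_eq)
lemma bapp_plus: "bapp (S + T) x = bapp S x + bapp T x"
  by (simp add: bapp_def plus_bop.rep_eq blinfun.bilinear_simps)
lemma bapp_minus: "bapp (S - T) x = bapp S x - bapp T x"
  by (simp add: bapp_def minus_bop.rep_eq blinfun.bilinear_simps)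
lemma bapp_scaleR: "bapp (c *\<^sub>R T) x = c *\<^sub>R bapp T x"
  by (simp add: bapp_def scaleR_bop.rep_eq blinfun.bilinear_simps)
lemma bapp_norm: "norm (bapp T x) \<le> norm T * norm x"
  by (simp add: bapp_def norm_blinfun flip: norm_bop_rep)
lemma bapp_linear_arg: "bounded_linear (bapp T)"
  unfolding bapp_def by (rule bounded_linear_blinfun_apply[OF bounded_linear_ident])
lemma bapp_bounded_linear_op: "bounded_linear (\<lambda>T. bapp T x)"
proof
  show "bapp (S + T) x = bapp S x + bapp T x" for S T by (rule bapp_plus)
  show "bapp (c *\<^sub>R T) x = c *\<^sub>R bapp T x" for c T by (rule bapp_scaleR)
  show "\<exists>K. \<forall>T. norm (bapp T x) \<le> norm T * K"
    by (rule exI[of _ "norm x"]) (simp add: bapp_norm)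
qed

lemma bapp_lin_arg: "bapp T (a *\<^sub>R u + v) = a *\<^sub>R bapp T u + bapp T v"
  by (simp add: bapp_def blinfun.bilinear_simps)

lemma bapp_Bop: "bounded_linear f \<Longrightarrow> bapp (Bop (Blinfun f)) x = f x"
  by (simp add: bapp_def Bop_inverse bounded_linear_Blinfun_apply)

lemma norm_Bop_le: "bounded_linear f \<Longrightarrow> 0 \<le> K \<Longrightarrow> (\<And>x. norm (f x) \<le> K * norm x) \<Longrightarrow>
    norm (Bop (Blinfun f)) \<le> K"
  by (simp add: norm_bop_rep[symmetric] Bop_inverse norm_blinfun_bound bounded_linear_Blinfun_apply)

lemma norm_inv_scaleR: "norm (inverse h *\<^sub>R v) = norm v / norm h"
  by (simp add: divide_inverse mult.commute abs_inverse)

lemma exp_scaleR_add: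
  fixes A :: "'a::{real_normed_algebra_1, banach}"
  shows "exp ((t + s) *\<^sub>R A) = exp (t *\<^sub>R A) * exp (s *\<^sub>R A)"
proof -
  have "(t *\<^sub>R A) * (s *\<^sub>R A) = (s *\<^sub>R A) * (t *\<^sub>R A)"
    by (simp add: mult.commute)
  then show ?thesis by (simp add: scaleR_add_left exp_add_commuting)
qed

lemma semigroup_generator:
  fixes A :: "'a::{real_normed_vector, perfect_space, banach} bop"
  shows "((\<lambda>h. norm ((bapp (exp (h *\<^sub>R A)) x - x) /\<^sub>R h - bapp A x)) \<longlongrightarrow> 0) (at_right 0)"
proof -
  have "((\<lambda>t. exp (t *\<^sub>R A)) has_vector_derivative exp (0 *\<^sub>R A) * A) (at 0)"
    by (rule exp_scaleR_has_vector_derivative_right)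
  then have "((\<lambda>t. exp (t *\<^sub>R A)) has_derivative (\<lambda>h. h *\<^sub>R A)) (at 0)"
    by (simp add: has_vector_derivative_def)
  then have lim: "((\<lambda>y. norm ((exp (y *\<^sub>R A) - 1) - y *\<^sub>R A) / norm y) \<longlongrightarrow> 0) (at 0)"
    by (simp add: has_derivative_iff_norm)
  have lim2: "((\<lambda>y. norm x * (norm ((exp (y *\<^sub>R A) - 1) - y *\<^sub>R A) / norm y)) \<longlongrightarrow> 0) (at 0)"
    by (rule tendsto_mult_right_zero[OF lim])
  have "((\<lambda>h. (bapp (exp (h *\<^sub>R A)) x - x) /\<^sub>R h - bapp A x) \<longlongrightarrow> 0) (at 0)"
  proof (rule Lim_null_comparison[OF _ lim2])
    show "\<forall>\<^sub>F h in at 0. norm ((bapp (exp (h *\<^sub>R A)) x - x) /\<^sub>R h - bapp A x)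
        \<le> norm x * (norm ((exp (h *\<^sub>R A) - 1) - h *\<^sub>R A) / norm h)"
    proof (rule eventually_at_filter[THEN iffD2, OF always_eventually], intro allI impI)
      fix h :: real assume "h \<noteq> 0"
      have "(bapp (exp (h *\<^sub>R A)) x - x) /\<^sub>R h - bapp A x
          = bapp (inverse h *\<^sub>R ((exp (h *\<^sub>R A) - 1) - h *\<^sub>R A)) x"
      proof -
        have "bapp (inverse h *\<^sub>R ((exp (h *\<^sub>R A) - 1) - h *\<^sub>R A)) x
            = inverse h *\<^sub>R ((bapp (exp (h *\<^sub>R A)) x - x) - h *\<^sub>R bapp A x)"
          by (simp add: bapp_minus bapp_scaleR bapp_one)
        also have "\<dots> = (bapp (exp (h *\<^sub>R A)) x - x) /\<^sub>R h - bapp A x"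
          using \<open>h \<noteq> 0\<close> by (simp add: scaleR_diff_right)
        finally show ?thesis by simp
      qed
      also have "norm \<dots> \<le> norm (inverse h *\<^sub>R ((exp (h *\<^sub>R A) - 1) - h *\<^sub>R A)) * norm x"
        by (rule bapp_norm)
      also have "\<dots> = norm x * (norm ((exp (h *\<^sub>R A) - 1) - h *\<^sub>R A) / norm h)"
        by (simp only: norm_inv_scaleR mult.commute)
      finally show "norm ((bapp (exp (h *\<^sub>R A)) x - x) /\<^sub>R h - bapp A x)
        \<le> norm x * (norm ((exp (h *\<^sub>R A) - 1) - h *\<^sub>R A) / norm h)" .
    qed
  qed
  then have "((\<lambda>h. (bapp (exp (h *\<^sub>R A)) x - x) /\<^sub>R h - bapp A x) \<longlongrightarrow> 0) (at_right 0)"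
    by (rule tendsto_mono[OF at_le[OF subset_UNIV]])
  then show ?thesis
    using tendsto_norm_zero by blast
qed

lemma semigroup_strong_cont:
  fixes A :: "'a::{real_normed_vector, perfect_space, banach} bop"
  shows "((\<lambda>h. norm (bapp (exp (h *\<^sub>R A)) x - x)) \<longlongrightarrow> 0) (at_right 0)"
proof -
  have "continuous (at 0) (\<lambda>t. exp (t *\<^sub>R A))"
    by (rule has_vector_derivative_continuous[OF exp_scaleR_has_vector_derivative_right])
  then have "((\<lambda>t. exp (t *\<^sub>R A)) \<longlongrightarrow> 1) (at 0)"
    by (simp add: continuous_at)
  then have "((\<lambda>t. bapp (exp (t *\<^sub>R A)) x) \<longlongrightarrow> bapp 1 x) (at 0)"
    by (rule bounded_linear.tendsto[OF bapp_bounded_linear_op])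
  then have "((\<lambda>t. bapp (exp (t *\<^sub>R A)) x - x) \<longlongrightarrow> 0) (at 0)"
    by (simp add: bapp_one LIM_zero)
  then have "((\<lambda>t. bapp (exp (t *\<^sub>R A)) x - x) \<longlongrightarrow> 0) (at_right 0)"
    by (rule tendsto_mono[OF at_le[OF subset_UNIV]])
  then show ?thesis
    using tendsto_norm_zero by blast
qed

lemma semigroup_decay:
  fixes A :: "'a::{real_inner, perfect_space, banach} bop"
  assumes diss: "\<And>y. inner (bapp A y) y \<le> - \<delta> * (norm y)\<^sup>2"
    and "t \<ge> 0"
  shows "norm (bapp (exp (t *\<^sub>R A)) x) \<le> exp (- \<delta> * t) * norm x"
proof -
  define u where "u s = bapp (exp (s *\<^sub>R A)) x" for s
  define \<phi> where "\<phi> s = exp (2 * \<delta> * s) * inner (u s) (u s)" for s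
  have du: "(u has_vector_derivative bapp A (u s)) (at s)" for s
  proof -
    have "((\<lambda>s. bapp (exp (s *\<^sub>R A)) x) has_vector_derivative bapp (A * exp (s *\<^sub>R A)) x) (at s)"
      by (rule bounded_linear.has_vector_derivative[OF bapp_bounded_linear_op
            exp_scaleR_has_vector_derivative_left])
    then show ?thesis by (simp add: u_def[abs_def] bapp_mult)
  qed
  have dphi: "(\<phi> has_real_derivative
      (exp (2 * \<delta> * s) * (inner (u s) (bapp A (u s)) + inner (bapp A (u s)) (u s))
       + 2 * \<delta> * exp (2 * \<delta> * s) * inner (u s) (u s))) (at s)" for s
  proof -
    have "((\<lambda>s. inner (u s) (u s)) has_vector_derivative
        (inner (u s) (bapp A (u s)) + inner (bapp A (u s)) (u s))) (at s)"
      by (rule bounded_bilinear.has_vector_derivative[OF bounded_bilinear_inner du du])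
    then have i: "((\<lambda>s. inner (u s) (u s)) has_real_derivative
        (inner (u s) (bapp A (u s)) + inner (bapp A (u s)) (u s))) (at s)"
      by (simp add: has_real_derivative_iff_has_vector_derivative)
    have e: "((\<lambda>s. exp (2 * \<delta> * s)) has_real_derivative 2 * \<delta> * exp (2 * \<delta> * s)) (at s)"
      by (auto intro!: derivative_eq_intros)
    show ?thesis
      unfolding \<phi>_def using DERIV_mult[OF e i] by (simp add: algebra_simps)
  qed
  have "\<phi> t \<le> \<phi> 0"
  proof (rule DERIV_nonpos_imp_nonincreasing[OF \<open>t \<ge> 0\<close>])
    fix s assume "0 \<le> s" "s \<le> t"
    have "inner (bapp A (u s)) (u s) \<le> - \<delta> * inner (u s) (u s)"
      using diss[of "u s"] by (simp add: power2_norm_eq_inner)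
    then have h1: "inner (bapp A (u s)) (u s) + \<delta> * inner (u s) (u s) \<le> 0"
      by simp
    have h2: "exp (2 * \<delta> * s) * (inner (bapp A (u s)) (u s) + \<delta> * inner (u s) (u s)) \<le> 0"
      by (rule mult_nonneg_nonpos[OF _ h1]) simp
    have h3: "exp (2 * \<delta> * s) * (inner (u s) (bapp A (u s)) + inner (bapp A (u s)) (u s))
       + 2 * \<delta> * exp (2 * \<delta> * s) * inner (u s) (u s)
       = 2 * (exp (2 * \<delta> * s) * (inner (bapp A (u s)) (u s) + \<delta> * inner (u s) (u s)))"
      by (simp add: inner_commute[of "u s" "bapp A (u s)"] algebra_simps)
    have "exp (2 * \<delta> * s) * (inner (u s) (bapp A (u s)) + inner (bapp A (u s)) (u s))
       + 2 * \<delta> * exp (2 * \<delta> * s) * inner (u s) (u s) \<le> 0"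
      unfolding h3 using h2 by linarith
    then show "\<exists>y. (\<phi> has_real_derivative y) (at s) \<and> y \<le> 0"
      using dphi by blast
  qed
  moreover have "\<phi> 0 = (norm x)\<^sup>2"
    by (simp add: \<phi>_def u_def bapp_one power2_norm_eq_inner)
  moreover have "\<phi> t = exp (2 * \<delta> * t) * (norm (u t))\<^sup>2"
    by (simp add: \<phi>_def power2_norm_eq_inner)
  ultimately have "exp (2 * \<delta> * t) * (norm (u t))\<^sup>2 \<le> (norm x)\<^sup>2" by simp
  then have "(norm (u t))\<^sup>2 \<le> exp (- (2 * \<delta> * t)) * (norm x)\<^sup>2"
    by (simp add: exp_minus field_simps)
  also have "\<dots> = (exp (- \<delta> * t) * norm x)\<^sup>2"
    by (simp add: power_mult_distrib power2_eq_square exp_add[symmetric])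
  finally have "(norm (u t))\<^sup>2 \<le> (exp (- \<delta> * t) * norm x)\<^sup>2" .
  then show ?thesis
    unfolding u_def by (rule power2_le_imp_le) simp
qed


lemma summable_on_diff_real:
  fixes f g :: "'a \<Rightarrow> real"
  assumes "f summable_on A" "g summable_on A"
  shows "(\<lambda>x. f x - g x) summable_on A"
  using summable_on_add[OF assms(1) summable_on_uminus[THEN iffD2, OF assms(2)]] by simp

lemma infsum_diff_real:
  fixes f g :: "'a \<Rightarrow> real"
  assumes "f summable_on A" "g summable_on A"
  shows "(\<Sum>\<^sub>\<infinity>x\<in>A. f x - g x) = (\<Sum>\<^sub>\<infinity>x\<in>A. f x) - (\<Sum>\<^sub>\<infinity>x\<in>A. g x)"
  using infsum_add[OF assms(1) summable_on_uminus[THEN iffD2, OF assms(2)]]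
  by (simp add: infsum_uminus)

lemma weighted_CS:
  fixes w a :: "'a \<Rightarrow> real"
  assumes wnn: "\<And>x. x \<in> A \<Longrightarrow> w x \<ge> 0"
    and s1: "w summable_on A" and s2: "(\<lambda>x. w x * a x) summable_on A"
    and s3: "(\<lambda>x. w x * (a x)\<^sup>2) summable_on A"
  shows "(\<Sum>\<^sub>\<infinity>x\<in>A. w x * a x)\<^sup>2 \<le> (\<Sum>\<^sub>\<infinity>x\<in>A. w x) * (\<Sum>\<^sub>\<infinity>x\<in>A. w x * (a x)\<^sup>2)"
proof -
  define W where "W = (\<Sum>\<^sub>\<infinity>x\<in>A. w x)"
  define P where "P = (\<Sum>\<^sub>\<infinity>x\<in>A. w x * a x)"
  define S where "S = (\<Sum>\<^sub>\<infinity>x\<in>A. w x * (a x)\<^sup>2)"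
  have W0: "W \<ge> 0" unfolding W_def by (rule infsum_nonneg) (use wnn in auto)
  have quad: "0 \<le> S - 2 * t * P + t\<^sup>2 * W" for t
  proof -
    have e: "(\<lambda>x. w x * (a x - t)\<^sup>2) = (\<lambda>x. (w x * (a x)\<^sup>2 + t\<^sup>2 * w x) - 2 * t * (w x * a x))"
      by (auto simp: power2_diff algebra_simps)
    have sa: "(\<lambda>x. w x * (a x)\<^sup>2 + t\<^sup>2 * w x) summable_on A"
      by (intro summable_on_add s3 summable_on_cmult_right s1)
    have sb: "(\<lambda>x. 2 * t * (w x * a x)) summable_on A"
      by (intro summable_on_cmult_right s2)
    have "0 \<le> (\<Sum>\<^sub>\<infinity>x\<in>A. w x * (a x - t)\<^sup>2)"
      by (rule infsum_nonneg) (use wnn in auto)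
    also have "\<dots> = (\<Sum>\<^sub>\<infinity>x\<in>A. w x * (a x)\<^sup>2 + t\<^sup>2 * w x) - (\<Sum>\<^sub>\<infinity>x\<in>A. 2 * t * (w x * a x))"
      unfolding e by (rule infsum_diff_real[OF sa sb])
    also have "\<dots> = S + t\<^sup>2 * W - 2 * t * P"
      unfolding S_def W_def P_def
      by (simp add: infsum_add[OF s3 summable_on_cmult_right[OF s1]] infsum_cmult_right[OF s1]
            infsum_cmult_right[OF s2])
    finally show ?thesis by simp
  qed
  show ?thesis
  proof (cases "W = 0")
    case True
    have q0: "0 \<le> S - 2 * t * P" for t using quad[of t] True by simp
    have "P = 0"
    proof (rule ccontr)
      assume "P \<noteq> 0"
      have "0 \<le> S - 2 * ((S + 1) / (2 * P)) * P" by (rule q0)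
      also have "\<dots> = -1" using \<open>P \<noteq> 0\<close> by (simp add: field_simps)
      finally show False by simp
    qed
    then show ?thesis using True by (simp flip: P_def W_def S_def)
  next
    case False
    then have Wp: "W > 0" using W0 by simp
    have "0 \<le> S - 2 * (P / W) * P + (P / W)\<^sup>2 * W" by (rule quad)
    also have "\<dots> = S - P\<^sup>2 / W" using Wp by (simp add: field_simps power2_eq_square)
    finally have "P\<^sup>2 \<le> S * W" using Wp by (simp add: field_simps)
    then have "P\<^sup>2 \<le> W * S" by (simp add: mult.commute)
    then show ?thesis unfolding P_def W_def S_def .
  qed
qed

locale wgraph =
  fixes b :: "'x \<Rightarrow> 'x \<Rightarrow> real" and m :: "'x \<Rightarrow> real" and C :: real
  assumes mpos: "\<And>x. m x > 0" and bsym: "\<And>x y. b x y = b y x" and bnn: "\<And>x y. 0 \<le> b x y"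
    and bsum: "\<And>x. b x summable_on UNIV" and degC: "\<And>x. (\<Sum>\<^sub>\<infinity>y. b x y) \<le> C * m x"
    and Cpos: "C > 0"
begin

definition l2f :: "('x \<Rightarrow> real) \<Rightarrow> bool" where
  "l2f f \<longleftrightarrow> (\<lambda>x. m x * (f x)\<^sup>2) summable_on UNIV"

definition T :: "('x \<Rightarrow> real) \<Rightarrow> 'x \<Rightarrow> 'x \<Rightarrow> real" where
  "T f x y = b x y * (f x - f y)\<^sup>2"

definition Q :: "('x \<Rightarrow> real) \<Rightarrow> real" where
  "Q f = (\<Sum>\<^sub>\<infinity>(x,y)\<in>UNIV. T f x y)"

definition deg :: "'x \<Rightarrow> real" where "deg x = (\<Sum>\<^sub>\<infinity>y. b x y)"

lemma b_le_deg: "b x y \<le> deg x"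
  unfolding deg_def using finite_sum_le_infsum[OF bsum[of x], of "{y}"] bnn by simp

lemma deg_le: "deg x \<le> C * m x" unfolding deg_def by (rule degC)

lemma deg_nn: "deg x \<ge> 0" unfolding deg_def by (rule infsum_nonneg) (simp add: bnn)

lemma b_le: "b x y \<le> C * m y"
  using b_le_deg[of y x] deg_le[of y] bsym[of x y] by simp

lemma bsum_sym: "(\<lambda>x. b x y) summable_on UNIV"
  using bsum[of y] by (simp add: bsym[of _ y])

lemma deg_sym: "(\<Sum>\<^sub>\<infinity>x. b x y) = deg y"
  unfolding deg_def by (simp add: bsym[of _ y])

lemma l2f_nn: "0 \<le> m x * (f x)\<^sup>2"
  using mpos[of x] by simp

lemma bf2_summable:
  assumes "l2f f" shows "(\<lambda>y. b x y * (f y)\<^sup>2) summable_on UNIV"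
proof (rule summable_on_comparison_test)
  show "(\<lambda>y. C * (m y * (f y)\<^sup>2)) summable_on UNIV"
    using assms unfolding l2f_def by (rule summable_on_cmult_right)
  show "b x y * (f y)\<^sup>2 \<le> C * (m y * (f y)\<^sup>2)" for y
    using mult_right_mono[OF b_le[of x y], of "(f y)\<^sup>2"] by (simp add: mult.assoc)
  show "0 \<le> b x y * (f y)\<^sup>2" for y using bnn[of x y] by simp
qed

lemma bf_summable:
  assumes "l2f f" shows "(\<lambda>y. b x y * f y) summable_on UNIV"
proof -
  have "(\<lambda>y. \<bar>b x y * f y\<bar>) summable_on UNIV"
  proof (rule summable_on_comparison_test)
    show "(\<lambda>y. b x y + b x y * (f y)\<^sup>2) summable_on UNIV"
      by (intro summable_on_add bsum bf2_summable assms)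
    show "\<bar>b x y * f y\<bar> \<le> b x y + b x y * (f y)\<^sup>2" for y
    proof -
      have "\<bar>f y\<bar> \<le> 1 + (f y)\<^sup>2"
      proof (cases "\<bar>f y\<bar> \<le> 1")
        case False
        then have "1 \<le> \<bar>f y\<bar>" by simp
        then have "\<bar>f y\<bar> * 1 \<le> \<bar>f y\<bar> * \<bar>f y\<bar>" by (rule mult_left_mono) simp
        then have "\<bar>f y\<bar> \<le> (f y)\<^sup>2" by (simp add: power2_eq_square)
        then show ?thesis by simp
      qed (simp add: add_increasing2)
      then have "b x y * \<bar>f y\<bar> \<le> b x y * (1 + (f y)\<^sup>2)"
        by (rule mult_left_mono[OF _ bnn])
      then show ?thesis using bnn[of x y] by (simp add: abs_mult algebra_simps)
    qed
  qed simp
  then show ?thesis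
    using summable_on_iff_abs_summable_on_real[of "\<lambda>y. b x y * f y" UNIV] by simp
qed

lemma bdiff_summable:
  assumes "l2f f" shows "(\<lambda>y. b x y * (f x - f y)) summable_on UNIV"
proof -
  have "(\<lambda>y. b x y * f x - b x y * f y) summable_on UNIV"
    by (rule summable_on_diff_real[OF summable_on_cmult_left[OF bsum] bf_summable[OF assms]])
  then show ?thesis by (simp add: algebra_simps)
qed

lemma T_nn: "0 \<le> T f x y" unfolding T_def using bnn by simp

lemma T_le: "T f x y \<le> 2 * (b x y * (f x)\<^sup>2) + 2 * (b x y * (f y)\<^sup>2)"
proof -
  have h: "0 \<le> (f x)\<^sup>2 + (f y)\<^sup>2 + 2 * f x * f y"
    using zero_le_power2[of "f x + f y"] by (simp add: power2_sum)
  have "(f x - f y)\<^sup>2 \<le> 2 * (f x)\<^sup>2 + 2 * (f y)\<^sup>2"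
    unfolding power2_diff using h by linarith
  then have "b x y * (f x - f y)\<^sup>2 \<le> b x y * (2 * (f x)\<^sup>2 + 2 * (f y)\<^sup>2)"
    by (rule mult_left_mono[OF _ bnn])
  then show ?thesis unfolding T_def by (simp add: algebra_simps)
qed

lemma T_row_summable:
  assumes "l2f f" shows "(\<lambda>y. T f x y) summable_on UNIV"
proof (rule summable_on_comparison_test)
  show "(\<lambda>y. 2 * (b x y * (f x)\<^sup>2) + 2 * (b x y * (f y)\<^sup>2)) summable_on UNIV"
    by (intro summable_on_add summable_on_cmult_right summable_on_cmult_left bsum bf2_summable assms)
qed (simp_all add: T_le T_nn)

lemma pair_fx2_summable:
  assumes "l2f f" shows "(\<lambda>(x,y). b x y * (f x)\<^sup>2) summable_on UNIV"
proof -
  have "(\<lambda>(x,y). b x y * (f x)\<^sup>2) summable_on Sigma UNIV (\<lambda>_. UNIV)"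
  proof (rule summable_on_SigmaI)
    show "((\<lambda>y. case (x, y) of (x, y) \<Rightarrow> b x y * (f x)\<^sup>2) has_sum deg x * (f x)\<^sup>2) UNIV" for x
      unfolding deg_def by (simp add: has_sum_cmult_left[OF has_sum_infsum[OF bsum]])
    show "(\<lambda>x. deg x * (f x)\<^sup>2) summable_on UNIV"
    proof (rule summable_on_comparison_test)
      show "(\<lambda>x. C * (m x * (f x)\<^sup>2)) summable_on UNIV"
        using assms unfolding l2f_def by (rule summable_on_cmult_right)
      show "deg x * (f x)\<^sup>2 \<le> C * (m x * (f x)\<^sup>2)" for x
        using mult_right_mono[OF deg_le[of x], of "(f x)\<^sup>2"] by (simp add: mult.assoc)
      show "0 \<le> deg x * (f x)\<^sup>2" for x using deg_nn[of x] by simp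
    qed
    show "0 \<le> (case (x, y) of (x, y) \<Rightarrow> b x y * (f x)\<^sup>2)" for x y using bnn[of x y] by simp
  qed
  then show ?thesis by simp
qed

lemma pair_fy2_summable:
  assumes "l2f f" shows "(\<lambda>(x,y). b x y * (f y)\<^sup>2) summable_on UNIV"
proof -
  have "(\<lambda>(x,y). b x y * (f x)\<^sup>2) summable_on (UNIV \<times> UNIV)"
    using pair_fx2_summable[OF assms] by simp
  then have "(\<lambda>(x,y). b y x * (f y)\<^sup>2) summable_on (UNIV \<times> UNIV)"
    by (subst (asm) summable_on_swap) (simp add: case_prod_unfold)
  then show ?thesis by (simp add: bsym[of _ "_ :: 'x"])
qed

lemma T_summable:
  assumes "l2f f" shows "(\<lambda>(x,y). T f x y) summable_on UNIV"
proof (rule summable_on_comparison_test)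
  show "(\<lambda>p. 2 * (case p of (x,y) \<Rightarrow> b x y * (f x)\<^sup>2) + 2 * (case p of (x,y) \<Rightarrow> b x y * (f y)\<^sup>2))
      summable_on UNIV"
    by (intro summable_on_add summable_on_cmult_right pair_fx2_summable pair_fy2_summable assms)
qed (auto simp: T_le T_nn)

lemma P1_eq:
  assumes "l2f f"
  shows "(\<Sum>\<^sub>\<infinity>(x,y)\<in>UNIV. b x y * (f x)\<^sup>2) = (\<Sum>\<^sub>\<infinity>x. deg x * (f x)\<^sup>2)"
proof -
  have "(\<Sum>\<^sub>\<infinity>(x,y)\<in>UNIV. b x y * (f x)\<^sup>2) = (\<Sum>\<^sub>\<infinity>x. \<Sum>\<^sub>\<infinity>y. b x y * (f x)\<^sup>2)"
    using infsum_Sigma_banach[of "\<lambda>(x,y). b x y * (f x)\<^sup>2" UNIV "\<lambda>_. UNIV"] pair_fx2_summable[OF assms]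
    by simp
  also have "\<dots> = (\<Sum>\<^sub>\<infinity>x. deg x * (f x)\<^sup>2)"
    unfolding deg_def by (simp add: infsum_cmult_left[OF bsum])
  finally show ?thesis .
qed

lemma P2_eq:
  assumes "l2f f"
  shows "(\<Sum>\<^sub>\<infinity>(x,y)\<in>UNIV. b x y * (f y)\<^sup>2) = (\<Sum>\<^sub>\<infinity>(x,y)\<in>UNIV. b x y * (f x)\<^sup>2)"
proof -
  have "((\<lambda>(x,y). b x y * (f x)\<^sup>2) has_sum (\<Sum>\<^sub>\<infinity>(x,y)\<in>UNIV. b x y * (f x)\<^sup>2)) (UNIV \<times> UNIV)"
    using has_sum_infsum[OF pair_fx2_summable[OF assms]] by simp
  then have "((\<lambda>(x,y). b y x * (f y)\<^sup>2) has_sum (\<Sum>\<^sub>\<infinity>(x,y)\<in>UNIV. b x y * (f x)\<^sup>2)) (UNIV \<times> UNIV)"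
    by (subst (asm) has_sum_swap) (simp add: case_prod_unfold)
  then have "((\<lambda>(x,y). b x y * (f y)\<^sup>2) has_sum (\<Sum>\<^sub>\<infinity>(x,y)\<in>UNIV. b x y * (f x)\<^sup>2)) UNIV"
    by (simp add: bsym[of _ "_ :: 'x"])
  then show ?thesis by (rule infsumI)
qed

lemma Q_nn: "0 \<le> Q f"
  unfolding Q_def by (rule infsum_nonneg) (auto simp: T_nn)

lemma Q_le:
  assumes "l2f f" shows "Q f \<le> 4 * C * (\<Sum>\<^sub>\<infinity>x. m x * (f x)\<^sup>2)"
proof -
  let ?P1 = "(\<Sum>\<^sub>\<infinity>(x,y)\<in>UNIV. b x y * (f x)\<^sup>2)"
  let ?P2 = "(\<Sum>\<^sub>\<infinity>(x,y)\<in>UNIV. b x y * (f y)\<^sup>2)"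
  define G1 where "G1 = (\<lambda>p. case p of (x,y) \<Rightarrow> b x y * (f x)\<^sup>2)"
  define G2 where "G2 = (\<lambda>p. case p of (x,y) \<Rightarrow> b x y * (f y)\<^sup>2)"
  have s1: "G1 summable_on UNIV" unfolding G1_def by (rule pair_fx2_summable[OF assms])
  have s2: "G2 summable_on UNIV" unfolding G2_def by (rule pair_fy2_summable[OF assms])
  have s1': "(\<lambda>p. 2 * G1 p) summable_on UNIV" by (rule summable_on_cmult_right[OF s1])
  have s2': "(\<lambda>p. 2 * G2 p) summable_on UNIV" by (rule summable_on_cmult_right[OF s2])
  have "Q f \<le> (\<Sum>\<^sub>\<infinity>p\<in>UNIV. 2 * G1 p + 2 * G2 p)"
    unfolding Q_def
  proof (rule infsum_mono[OF T_summable[OF assms] summable_on_add[OF s1' s2']])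
    fix p :: "'x \<times> 'x"
    show "(case p of (x, y) \<Rightarrow> T f x y) \<le> 2 * G1 p + 2 * G2 p"
      by (cases p) (simp add: G1_def G2_def T_le)
  qed
  also have "\<dots> = (\<Sum>\<^sub>\<infinity>p\<in>UNIV. 2 * G1 p) + (\<Sum>\<^sub>\<infinity>p\<in>UNIV. 2 * G2 p)"
    by (rule infsum_add[OF s1' s2'])
  also have "\<dots> = 2 * infsum G1 UNIV + 2 * infsum G2 UNIV"
  proof -
    have "(\<Sum>\<^sub>\<infinity>p\<in>UNIV. 2 * G1 p) = 2 * infsum G1 UNIV"
      by (rule infsum_cmult_right) (use s1 in simp)
    moreover have "(\<Sum>\<^sub>\<infinity>p\<in>UNIV. 2 * G2 p) = 2 * infsum G2 UNIV"
      by (rule infsum_cmult_right) (use s2 in simp)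
    ultimately show ?thesis by simp
  qed
  also have "\<dots> = 2 * ?P1 + 2 * ?P2"
    unfolding G1_def G2_def by (simp add: case_prod_unfold)
  also have "\<dots> = 4 * ?P1" using P2_eq[OF assms] by simp
  moreover have "?P1 \<le> C * (\<Sum>\<^sub>\<infinity>x. m x * (f x)\<^sup>2)"
  proof -
    have "?P1 = (\<Sum>\<^sub>\<infinity>x. deg x * (f x)\<^sup>2)" by (rule P1_eq[OF assms])
    also have "\<dots> \<le> (\<Sum>\<^sub>\<infinity>x. C * (m x * (f x)\<^sup>2))"
    proof (rule infsum_mono)
      show "(\<lambda>x. deg x * (f x)\<^sup>2) summable_on UNIV"
      proof (rule summable_on_comparison_test)
        show "(\<lambda>x. C * (m x * (f x)\<^sup>2)) summable_on UNIV"
          using assms unfolding l2f_def by (rule summable_on_cmult_right)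
        show "deg x * (f x)\<^sup>2 \<le> C * (m x * (f x)\<^sup>2)" for x
          using mult_right_mono[OF deg_le[of x], of "(f x)\<^sup>2"] by (simp add: mult.assoc)
        show "0 \<le> deg x * (f x)\<^sup>2" for x using deg_nn[of x] by simp
      qed
      show "(\<lambda>x. C * (m x * (f x)\<^sup>2)) summable_on UNIV"
        using assms unfolding l2f_def by (rule summable_on_cmult_right)
      show "deg x * (f x)\<^sup>2 \<le> C * (m x * (f x)\<^sup>2)" for x
        using mult_right_mono[OF deg_le[of x], of "(f x)\<^sup>2"] by (simp add: mult.assoc)
    qed
    also have "\<dots> = C * (\<Sum>\<^sub>\<infinity>x. m x * (f x)\<^sup>2)"
      by (rule infsum_cmult_right) (use assms in \<open>simp add: l2f_def\<close>)
    finally show ?thesis .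
  qed
  ultimately show ?thesis by linarith
qed

end


lemma l2f_sqrt_iff:
  assumes "\<And>x. m x > 0"
  shows "((\<lambda>x. m x * (f x)\<^sup>2) summable_on A) \<longleftrightarrow> ((\<lambda>x. (sqrt (m x) * f x)\<^sup>2) summable_on A)"
proof -
  have "(\<lambda>x. (sqrt (m x) * f x)\<^sup>2) = (\<lambda>x. m x * (f x)\<^sup>2)"
    using assms by (auto simp: power_mult_distrib intro!: ext less_imp_le)
  then show ?thesis by simp
qed

context wgraph
begin

lemma l2f_iff: "l2f f \<longleftrightarrow> (\<lambda>x. (sqrt (m x) * f x)\<^sup>2) summable_on UNIV"
  unfolding l2f_def using l2f_sqrt_iff[of m f UNIV] mpos by blast

lemma l2f_lin:
  assumes "l2f f" "l2f g" shows "l2f (\<lambda>x. a * f x + g x)"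
proof -
  have "(\<lambda>x. (a * (sqrt (m x) * f x) + sqrt (m x) * g x)\<^sup>2) summable_on UNIV"
    using assms unfolding l2f_iff by (intro sq_summable_add sq_summable_scale)
  then show ?thesis unfolding l2f_iff by (simp add: algebra_simps)
qed

lemma lap_eq: "laplacian b m f x = (1 / m x) * (\<Sum>\<^sub>\<infinity>y. b x y * (f x - f y))"
  by (simp add: laplacian_def)

lemma lap_sq:
  assumes "l2f f"
  shows "m x * (laplacian b m f x)\<^sup>2 \<le> C * (\<Sum>\<^sub>\<infinity>y. T f x y)"
proof -
  define S where "S = (\<Sum>\<^sub>\<infinity>y. b x y * (f x - f y))"
  have RT0: "0 \<le> (\<Sum>\<^sub>\<infinity>y. T f x y)" by (rule infsum_nonneg) (simp add: T_nn)
  have cs: "S\<^sup>2 \<le> deg x * (\<Sum>\<^sub>\<infinity>y. T f x y)"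
    unfolding S_def deg_def T_def
    by (rule weighted_CS[where w="b x" and a="\<lambda>y. f x - f y"])
      (use bnn bsum bdiff_summable[OF assms] T_row_summable[OF assms] in \<open>simp_all add: T_def\<close>)
  also have "\<dots> \<le> C * m x * (\<Sum>\<^sub>\<infinity>y. T f x y)"
    by (rule mult_right_mono[OF deg_le RT0])
  finally have "S\<^sup>2 \<le> C * m x * (\<Sum>\<^sub>\<infinity>y. T f x y)" .
  moreover have "m x * (m x * (laplacian b m f x)\<^sup>2) = S\<^sup>2"
    using mpos[of x] by (simp add: lap_eq S_def power2_eq_square field_simps)
  moreover have "C * m x * (\<Sum>\<^sub>\<infinity>y. T f x y) = m x * (C * (\<Sum>\<^sub>\<infinity>y. T f x y))"
    by (simp add: algebra_simps)
  ultimately have "m x * (m x * (laplacian b m f x)\<^sup>2) \<le> m x * (C * (\<Sum>\<^sub>\<infinity>y. T f x y))"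
    by linarith
  then show ?thesis
    using mpos[of x] by (simp add: mult_le_cancel_left_pos)
qed

lemma rowT_summable:
  assumes "l2f f" shows "(\<lambda>x. \<Sum>\<^sub>\<infinity>y. T f x y) summable_on UNIV"
  using summable_on_SigmaD[of "\<lambda>(x,y). T f x y" UNIV "\<lambda>_. UNIV"] T_summable[OF assms]
    T_row_summable[OF assms] by simp

lemma rowT_sum:
  assumes "l2f f" shows "(\<Sum>\<^sub>\<infinity>x. \<Sum>\<^sub>\<infinity>y. T f x y) = Q f"
  unfolding Q_def
  using infsum_Sigma_banach[of "\<lambda>(x,y). T f x y" UNIV "\<lambda>_. UNIV"] T_summable[OF assms] by simp

lemma lap_l2:
  assumes "l2f f"
  shows "l2f (laplacian b m f)" and "(\<Sum>\<^sub>\<infinity>x. m x * (laplacian b m f x)\<^sup>2) \<le> C * Q f"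
proof -
  have sC: "(\<lambda>x. C * (\<Sum>\<^sub>\<infinity>y. T f x y)) summable_on UNIV"
    by (rule summable_on_cmult_right[OF rowT_summable[OF assms]])
  show s: "l2f (laplacian b m f)"
    unfolding l2f_def
    by (rule summable_on_comparison_test[OF sC]) (simp_all add: lap_sq[OF assms] l2f_nn)
  have "(\<Sum>\<^sub>\<infinity>x. m x * (laplacian b m f x)\<^sup>2) \<le> (\<Sum>\<^sub>\<infinity>x. C * (\<Sum>\<^sub>\<infinity>y. T f x y))"
    by (rule infsum_mono[OF s[unfolded l2f_def] sC]) (simp add: lap_sq[OF assms])
  also have "\<dots> = C * Q f"
    using infsum_cmult_right[of C "\<lambda>x. \<Sum>\<^sub>\<infinity>y. T f x y" UNIV] rowT_summable[OF assms] rowT_sum[OF assms]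
    by simp
  finally show "(\<Sum>\<^sub>\<infinity>x. m x * (laplacian b m f x)\<^sup>2) \<le> C * Q f" .
qed

lemma lap_lin:
  assumes "l2f f" "l2f g"
  shows "laplacian b m (\<lambda>x. a * f x + g x) x = a * laplacian b m f x + laplacian b m g x"
proof -
  have "(\<Sum>\<^sub>\<infinity>y. b x y * ((a * f x + g x) - (a * f y + g y)))
      = (\<Sum>\<^sub>\<infinity>y. a * (b x y * (f x - f y)) + b x y * (g x - g y))"
    by (simp add: algebra_simps)
  also have "\<dots> = (\<Sum>\<^sub>\<infinity>y. a * (b x y * (f x - f y))) + (\<Sum>\<^sub>\<infinity>y. b x y * (g x - g y))"
    by (rule infsum_add[OF summable_on_cmult_right[OF bdiff_summable[OF assms(1)]] bdiff_summable[OF assms(2)]])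
  also have "\<dots> = a * (\<Sum>\<^sub>\<infinity>y. b x y * (f x - f y)) + (\<Sum>\<^sub>\<infinity>y. b x y * (g x - g y))"
    by (subst infsum_cmult_right) (use bdiff_summable[OF assms(1)] in auto)
  finally show ?thesis
    unfolding lap_eq by (simp add: algebra_simps)
qed

lemma energy:
  assumes "l2f f"
  shows "(\<Sum>\<^sub>\<infinity>x. m x * laplacian b m f x * f x) = Q f / 2"
proof -
  define R where "R = (\<lambda>(x,y). b x y * (f x - f y) * f x)"
  have Rb: "\<bar>R (x,y)\<bar> \<le> 2 * (b x y * (f x)\<^sup>2) + b x y * (f y)\<^sup>2" for x y
  proof -
    have a1: "\<bar>(f x - f y) * f x\<bar> \<le> \<bar>f x\<bar>\<^sup>2 + \<bar>f x\<bar> * \<bar>f y\<bar>"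
    proof -
      have "\<bar>f x - f y\<bar> \<le> \<bar>f x\<bar> + \<bar>f y\<bar>" by (rule abs_triangle_ineq4)
      then have "\<bar>f x - f y\<bar> * \<bar>f x\<bar> \<le> (\<bar>f x\<bar> + \<bar>f y\<bar>) * \<bar>f x\<bar>"
        by (rule mult_right_mono) simp
      moreover have "(\<bar>f x\<bar> + \<bar>f y\<bar>) * \<bar>f x\<bar> = \<bar>f x\<bar>\<^sup>2 + \<bar>f x\<bar> * \<bar>f y\<bar>"
        by (simp add: power2_eq_square algebra_simps)
      moreover have "\<bar>(f x - f y) * f x\<bar> = \<bar>f x - f y\<bar> * \<bar>f x\<bar>" by (rule abs_mult)
      ultimately show ?thesis by linarith
    qed
    have a2: "2 * (\<bar>f x\<bar> * \<bar>f y\<bar>) \<le> \<bar>f x\<bar>\<^sup>2 + \<bar>f y\<bar>\<^sup>2"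
      using sum_squares_bound[of "\<bar>f x\<bar>" "\<bar>f y\<bar>"] by (simp only: mult.assoc)
    have "\<bar>(f x - f y) * f x\<bar> \<le> 2 * \<bar>f x\<bar>\<^sup>2 + \<bar>f y\<bar>\<^sup>2"
      using a1 a2 zero_le_power2[of "\<bar>f x\<bar>"] zero_le_power2[of "\<bar>f y\<bar>"] by linarith
    then have "\<bar>(f x - f y) * f x\<bar> \<le> 2 * (f x)\<^sup>2 + (f y)\<^sup>2"
      by simp
    then have "b x y * \<bar>(f x - f y) * f x\<bar> \<le> b x y * (2 * (f x)\<^sup>2 + (f y)\<^sup>2)"
      by (rule mult_left_mono[OF _ bnn])
    moreover have "\<bar>R (x,y)\<bar> = b x y * \<bar>(f x - f y) * f x\<bar>"
      unfolding R_def by (simp only: case_prod_conv mult.assoc abs_mult abs_of_nonneg[OF bnn])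
    moreover have "b x y * (2 * (f x)\<^sup>2 + (f y)\<^sup>2) = 2 * (b x y * (f x)\<^sup>2) + b x y * (f y)\<^sup>2"
      by (simp add: algebra_simps)
    ultimately show ?thesis by linarith
  qed
  have Rs: "R summable_on UNIV"
  proof -
    have "(\<lambda>p. \<bar>R p\<bar>) summable_on UNIV"
    proof (rule summable_on_comparison_test)
      show "(\<lambda>p. 2 * (case p of (x,y) \<Rightarrow> b x y * (f x)\<^sup>2) + (case p of (x,y) \<Rightarrow> b x y * (f y)\<^sup>2))
          summable_on UNIV"
        by (intro summable_on_add summable_on_cmult_right pair_fx2_summable pair_fy2_summable assms)
      show "\<bar>R p\<bar> \<le> 2 * (case p of (x,y) \<Rightarrow> b x y * (f x)\<^sup>2) + (case p of (x,y) \<Rightarrow> b x y * (f y)\<^sup>2)" for p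
        by (cases p) (simp add: Rb)
    qed simp
    then show ?thesis using summable_on_iff_abs_summable_on_real[of R UNIV] by simp
  qed
  have rows: "(\<lambda>y. R (x,y)) summable_on UNIV" for x
  proof -
    have "(\<lambda>y. b x y * (f x - f y) * f x) summable_on UNIV"
      by (rule summable_on_cmult_left[OF bdiff_summable[OF assms]])
    then show ?thesis by (simp add: R_def)
  qed
  have "(\<Sum>\<^sub>\<infinity>x. m x * laplacian b m f x * f x) = (\<Sum>\<^sub>\<infinity>x. \<Sum>\<^sub>\<infinity>y. R (x,y))"
  proof (rule infsum_cong)
    fix x
    have "m x * laplacian b m f x * f x = (\<Sum>\<^sub>\<infinity>y. b x y * (f x - f y)) * f x"
      using mpos[of x] by (simp add: lap_eq)
    also have "\<dots> = (\<Sum>\<^sub>\<infinity>y. b x y * (f x - f y) * f x)"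
      by (rule infsum_cmult_left[symmetric]) (use bdiff_summable[OF assms] in auto)
    finally show "m x * laplacian b m f x * f x = (\<Sum>\<^sub>\<infinity>y. R (x,y))" by (simp add: R_def)
  qed
  also have "\<dots> = infsum R UNIV"
    using infsum_Sigma_banach[of R UNIV "\<lambda>_. UNIV"] Rs by simp
  finally have e1: "(\<Sum>\<^sub>\<infinity>x. m x * laplacian b m f x * f x) = infsum R UNIV" .
  define R' where "R' = (\<lambda>(x,y). b x y * (f y - f x) * f y)"
  have "(R has_sum infsum R UNIV) (UNIV \<times> UNIV)" using has_sum_infsum[OF Rs] by simp
  then have "((\<lambda>(x,y). R (y,x)) has_sum infsum R UNIV) (UNIV \<times> UNIV)"
    by (subst (asm) has_sum_swap) simp
  moreover have "(\<lambda>(x,y). R (y,x)) = R'"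
    by (auto simp: R_def R'_def bsym[of _ "_ :: 'x"] intro!: ext)
  ultimately have R'h: "(R' has_sum infsum R UNIV) UNIV" by simp
  have "((\<lambda>p. R p + R' p) has_sum (infsum R UNIV + infsum R UNIV)) UNIV"
    by (rule has_sum_add[OF has_sum_infsum[OF Rs] R'h])
  moreover have "(\<lambda>p. R p + R' p) = (\<lambda>(x,y). T f x y)"
    by (auto simp: R_def R'_def T_def power2_eq_square algebra_simps intro!: ext)
  ultimately have "Q f = 2 * infsum R UNIV"
    unfolding Q_def by (simp add: infsumI)
  then show ?thesis using e1 by simp
qed

end


fun reach :: "('x \<Rightarrow> 'x set) \<Rightarrow> nat \<Rightarrow> 'x \<Rightarrow> 'x set" where
  "reach h 0 u = {u}"
| "reach h (Suc n) u = reach h n u \<union> (\<Union>v\<in>reach h n u. h v)"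

lemma reach_mono: "n \<le> n' \<Longrightarrow> reach h n u \<subseteq> reach h n' u"
  by (rule lift_Suc_mono_le[of "\<lambda>n. reach h n u"]) auto

lemma reach_step: "v \<in> reach h n u \<Longrightarrow> w \<in> h v \<Longrightarrow> w \<in> reach h (Suc n) u"
  by auto

lemma reach_card:
  assumes "\<And>v. finite (h v)" "\<And>v. card (h v) \<le> K"
  shows "finite (reach h n u) \<and> card (reach h n u) \<le> (K + 1) ^ n"
proof (induction n)
  case 0 then show ?case by simp
next
  case (Suc n)
  then have fin: "finite (reach h n u)" and c: "card (reach h n u) \<le> (K + 1) ^ n" by auto
  have f2: "finite (reach h (Suc n) u)" using fin assms(1) by simp
  have "card (reach h (Suc n) u) \<le> card (reach h n u) + card (\<Union>v\<in>reach h n u. h v)"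
    by (simp add: card_Un_le)
  also have "card (\<Union>v\<in>reach h n u. h v) \<le> (\<Sum>v\<in>reach h n u. card (h v))"
    by (rule card_UN_le[OF fin])
  also have "\<dots> \<le> (\<Sum>v\<in>reach h n u. K)"
    by (rule sum_mono) (rule assms(2))
  also have "\<dots> = card (reach h n u) * K" by simp
  finally have "card (reach h (Suc n) u) \<le> card (reach h n u) * (K + 1)" by simp
  also have "\<dots> \<le> (K + 1) ^ n * (K + 1)" using c by (rule mult_right_mono) simp
  finally show ?case using f2 by (simp add: mult.commute)
qed

lemma path_reach:
  assumes edges: "\<And>j. Suc j < length p \<Longrightarrow> p ! Suc j \<in> h (p ! j)"
  shows "i \<le> k \<Longrightarrow> k < length p \<Longrightarrow> p ! k \<in> reach h (k - i) (p ! i)"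
proof (induction k)
  case 0 then show ?case by simp
next
  case (Suc k)
  show ?case
  proof (cases "i = Suc k")
    case True then show ?thesis by simp
  next
    case False
    then have "i \<le> k" using Suc.prems by simp
    then have "p ! k \<in> reach h (k - i) (p ! i)" using Suc by simp
    moreover have "p ! Suc k \<in> h (p ! k)" using edges Suc.prems by simp
    ultimately have "p ! Suc k \<in> reach h (Suc (k - i)) (p ! i)" by (rule reach_step)
    then show ?thesis using \<open>i \<le> k\<close> by (simp add: Suc_diff_le)
  qed
qed

lemma sum_fiber_le:
  fixes g :: "'b \<Rightarrow> real"
  assumes "finite W" "\<And>w. w \<in> W \<Longrightarrow> 0 \<le> g (h w)"
    and "\<And>e. e \<in> h ` W \<Longrightarrow> card {w\<in>W. h w = e} \<le> K"
  shows "(\<Sum>w\<in>W. g (h w)) \<le> K * (\<Sum>e\<in>h ` W. g e)"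
proof -
  have "(\<Sum>w\<in>W. g (h w)) = (\<Sum>e\<in>h ` W. \<Sum>w\<in>{w\<in>W. h w = e}. g (h w))"
    by (rule sum.image_gen[OF assms(1)])
  also have "\<dots> = (\<Sum>e\<in>h ` W. real (card {w\<in>W. h w = e}) * g e)"
    by (rule sum.cong) auto
  also have "\<dots> \<le> (\<Sum>e\<in>h ` W. real K * g e)"
  proof (rule sum_mono)
    fix e assume e: "e \<in> h ` W"
    then have "0 \<le> g e" using assms(2) by auto
    then show "real (card {w\<in>W. h w = e}) * g e \<le> real K * g e"
      using assms(3)[OF e] by (intro mult_right_mono) auto
  qed
  also have "\<dots> = K * (\<Sum>e\<in>h ` W. g e)" by (simp add: sum_distrib_left)
  finally show ?thesis .
qed

locale wgraph_dense = wgraph b m C for b :: "'x \<Rightarrow> 'x \<Rightarrow> real" and m C +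
  fixes D :: "'x set" and L :: real and Mm :: real
  assumes Lpos: "L > 0" and mbd: "\<And>x. m x \<le> Mm"
    and paths: "\<And>y. y \<notin> D \<Longrightarrow> \<exists>x\<in>D. \<exists>p. graph_path b p x y \<and> path_length b p \<le> L"
begin

definition "K = nat \<lceil>C * Mm * L\<rceil>"
definition "heavy u = {v. 1 / L \<le> b u v}"

lemma Mm_pos: "Mm > 0" using mpos[of undefined] mbd[of undefined] by simp

lemma K_ge: "C * Mm * L \<le> real K"
  unfolding K_def by linarith

lemma b_le_CM: "b u v \<le> C * Mm"
proof -
  have "b u v \<le> C * m u" using b_le_deg[of u v] deg_le[of u] by simp
  also have "\<dots> \<le> C * Mm" using mbd[of u] Cpos by simp
  finally show ?thesis .
qed

lemma heavy_card_fin: "finite F \<Longrightarrow> F \<subseteq> heavy u \<Longrightarrow> card F \<le> K"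
proof -
  assume F: "finite F" "F \<subseteq> heavy u"
  have "real (card F) * (1 / L) = (\<Sum>v\<in>F. 1 / L)" by simp
  also have "\<dots> \<le> (\<Sum>v\<in>F. b u v)" by (rule sum_mono) (use F in \<open>auto simp: heavy_def\<close>)
  also have "\<dots> \<le> deg u" unfolding deg_def
    by (rule finite_sum_le_infsum[OF bsum F(1)]) (auto simp: bnn)
  also have "\<dots> \<le> C * Mm" using deg_le[of u] mbd[of u] Cpos by (smt (verit) mult_left_mono)
  finally have "real (card F) \<le> C * Mm * L" using Lpos by (simp add: field_simps)
  then have "real (card F) \<le> real K" using K_ge by linarith
  then show "card F \<le> K" by simp
qed

lemma heavy_finite: "finite (heavy u)"
proof (rule ccontr)
  assume "infinite (heavy u)"
  then obtain F where "finite F" "card F = Suc K" "F \<subseteq> heavy u"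
    using infinite_arbitrarily_large by blast
  then show False using heavy_card_fin by fastforce
qed

lemma heavy_card: "card (heavy u) \<le> K"
  using heavy_card_fin[OF heavy_finite[of u] subset_refl] .

definition "Pc = (K + 1) ^ K"

lemma reachK: "finite (reach heavy K u) \<and> card (reach heavy K u) \<le> Pc"
  unfolding Pc_def by (rule reach_card[OF heavy_finite heavy_card])

lemma path_facts:
  assumes "y \<notin> D" "x \<in> D" "graph_path b p x y" "path_length b p \<le> L"
  shows "1 \<le> length p - 1" "length p - 1 \<le> K" "p ! 0 = x" "p ! (length p - 1) = y"
    "\<And>j. j < length p - 1 \<Longrightarrow> 1 / L \<le> b (p ! j) (p ! Suc j)"
    "\<And>j. Suc j < length p \<Longrightarrow> p ! Suc j \<in> heavy (p ! j)"
proof -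
  have ne: "p \<noteq> []" and hd: "hd p = x" and la: "last p = y"
    and pos: "\<And>j. Suc j < length p \<Longrightarrow> b (p ! j) (p ! Suc j) > 0"
    using assms(3) unfolding graph_path_def by auto
  show p0: "p ! 0 = x" using hd ne by (simp add: hd_conv_nth)
  show pn: "p ! (length p - 1) = y" using la ne by (simp add: last_conv_nth)
  show n1: "1 \<le> length p - 1"
  proof (rule ccontr)
    assume "\<not> 1 \<le> length p - 1"
    then have "length p - 1 = 0" by simp
    then have "x = y" using p0 pn by simp
    then show False using assms(1,2) by simp
  qed
  define n where "n = length p - 1"
  have tnn: "0 \<le> 1 / b (p ! j) (p ! Suc j)" if "j < n" for j
    by (simp add: bnn)
  have pl: "path_length b p = (\<Sum>j<n. 1 / b (p ! j) (p ! Suc j))"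
    unfolding path_length_def n_def ..
  show edge: "1 / L \<le> b (p ! j) (p ! Suc j)" if j: "j < length p - 1" for j
  proof -
    have "1 / b (p ! j) (p ! Suc j) \<le> (\<Sum>j<n. 1 / b (p ! j) (p ! Suc j))"
      by (rule member_le_sum) (use j tnn in \<open>auto simp: n_def\<close>)
    also have "\<dots> \<le> L" using assms(4) pl by simp
    finally have "1 / b (p ! j) (p ! Suc j) \<le> L" .
    moreover have "b (p ! j) (p ! Suc j) > 0" using pos[of j] j by simp
    ultimately show ?thesis using Lpos by (simp add: field_simps)
  qed
  show "p ! Suc j \<in> heavy (p ! j)" if "Suc j < length p" for j
    using edge[of j] that unfolding heavy_def by simp
  have CM: "C * Mm > 0" using Cpos Mm_pos by simp
  have "(\<Sum>j<n. 1 / (C * Mm)) \<le> (\<Sum>j<n. 1 / b (p ! j) (p ! Suc j))"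
  proof (rule sum_mono)
    fix j assume "j \<in> {..<n}"
    then have "b (p ! j) (p ! Suc j) > 0" using pos[of j] unfolding n_def by simp
    then show "1 / (C * Mm) \<le> 1 / b (p ! j) (p ! Suc j)"
      using b_le_CM[of "p ! j" "p ! Suc j"] by (simp add: frac_le)
  qed
  also have "\<dots> \<le> L" using assms(4) pl by simp
  finally have "real n / (C * Mm) \<le> L" by simp
  then have "real n \<le> C * Mm * L" using CM by (simp add: field_simps)
  then have "real n \<le> real K" using K_ge by linarith
  then show "length p - 1 \<le> K" unfolding n_def by simp
qed

lemma point_bound:
  assumes "y \<notin> D" "x \<in> D" "graph_path b p x y" "path_length b p \<le> L"
  shows "m y * (f y)\<^sup>2 \<le> (2 * Mm * C * L) * (m x * (f x)\<^sup>2)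
           + (2 * Mm * K * L) * (\<Sum>j<length p - 1. T f (p ! j) (p ! Suc j))"
proof -
  note pf = path_facts[OF assms]
  define n where "n = length p - 1"
  define d where "d j = f (p ! Suc j) - f (p ! j)" for j
  define B where "B = (\<Sum>j<n. T f (p ! j) (p ! Suc j))"
  have B0: "0 \<le> B" unfolding B_def by (rule sum_nonneg) (simp add: T_nn)
  have tel: "f y - f x = (\<Sum>j<n. d j)"
    unfolding d_def using sum_lessThan_telescope[of "\<lambda>j. f (p ! j)" n] pf(3,4) n_def by simp
  have sq: "(\<Sum>j<n. d j)\<^sup>2 \<le> (\<Sum>j<n. (d j)\<^sup>2) * real n"
    using sum_squared_le_sum_of_squares[of d "{..<n}"] by simp
  have dT: "(d j)\<^sup>2 \<le> L * T f (p ! j) (p ! Suc j)" if "j < n" for j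
  proof -
    have "1 / L \<le> b (p ! j) (p ! Suc j)" using pf(5) that n_def by simp
    then have "1 \<le> L * b (p ! j) (p ! Suc j)" using Lpos by (simp add: field_simps)
    then have "1 * (d j)\<^sup>2 \<le> (L * b (p ! j) (p ! Suc j)) * (d j)\<^sup>2"
      by (rule mult_right_mono) simp
    then show ?thesis unfolding T_def d_def by (simp add: power2_commute mult.assoc)
  qed
  have "(\<Sum>j<n. (d j)\<^sup>2) \<le> (\<Sum>j<n. L * T f (p ! j) (p ! Suc j))"
    by (rule sum_mono) (simp add: dT)
  also have "\<dots> = L * B" unfolding B_def by (simp add: sum_distrib_left)
  finally have sdB: "(\<Sum>j<n. (d j)\<^sup>2) \<le> L * B" .
  have nK: "real n \<le> real K" using pf(2) n_def by simp
  have "(\<Sum>j<n. d j)\<^sup>2 \<le> (L * B) * real n"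
    using sq mult_right_mono[OF sdB, of "real n"] by simp
  also have "\<dots> \<le> (L * B) * real K"
    by (rule mult_left_mono[OF nK]) (use Lpos B0 in simp)
  finally have sK: "(\<Sum>j<n. d j)\<^sup>2 \<le> L * B * real K" .
  have fy: "f y = f x + (\<Sum>j<n. d j)" using tel by simp
  have "(f y)\<^sup>2 \<le> 2 * (f x)\<^sup>2 + 2 * (\<Sum>j<n. d j)\<^sup>2"
  proof -
    have "0 \<le> (f x - (\<Sum>j<n. d j))\<^sup>2" by simp
    then show ?thesis unfolding fy power2_sum power2_diff by linarith
  qed
  also have "\<dots> \<le> 2 * (f x)\<^sup>2 + 2 * (L * B * real K)" using sK by simp
  finally have fy2: "(f y)\<^sup>2 \<le> 2 * (f x)\<^sup>2 + 2 * (L * B * real K)" .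
  have mx: "1 \<le> C * L * m x"
  proof -
    have "1 / L \<le> b (p ! 0) (p ! Suc 0)" using pf(5)[of 0] pf(1) by simp
    also have "\<dots> \<le> C * m x" using b_le_deg[of x] deg_le[of x] pf(3) by (metis order_trans)
    finally show ?thesis using Lpos by (simp add: field_simps)
  qed
  have fx: "(f x)\<^sup>2 \<le> C * L * (m x * (f x)\<^sup>2)"
    using mult_right_mono[OF mx, of "(f x)\<^sup>2"] by (simp add: mult.assoc)
  have "m y * (f y)\<^sup>2 \<le> Mm * (f y)\<^sup>2"
    by (rule mult_right_mono[OF mbd]) simp
  also have "\<dots> \<le> Mm * (2 * (C * L * (m x * (f x)\<^sup>2)) + 2 * (L * B * real K))"
    using fy2 fx Mm_pos by (intro mult_left_mono) auto
  also have "\<dots> = (2 * Mm * C * L) * (m x * (f x)\<^sup>2) + (2 * Mm * K * L) * B"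
    by (simp add: algebra_simps)
  finally show ?thesis unfolding B_def n_def .
qed

lemma gap:
  assumes f: "l2f f"
  shows "(\<Sum>\<^sub>\<infinity>x. m x * (f x)\<^sup>2) \<le> (1 + 2 * Mm * C * L * Pc) * (\<Sum>\<^sub>\<infinity>x\<in>D. m x * (f x)\<^sup>2)
          + (2 * Mm * K * L * (Pc * K)) * Q f"
proof -
  have "\<forall>y. \<exists>z. y \<notin> D \<longrightarrow> fst z \<in> D \<and> graph_path b (snd z) (fst z) y \<and> path_length b (snd z) \<le> L"
    using paths by fastforce
  from choice[OF this] obtain Z where Z: "\<And>y. y \<notin> D \<Longrightarrow>
      fst (Z y) \<in> D \<and> graph_path b (snd (Z y)) (fst (Z y)) y \<and> path_length b (snd (Z y)) \<le> L"
    by blast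
  define X where "X y = fst (Z y)" for y
  define P where "P y = snd (Z y)" for y
  define n where "n y = length (P y) - 1" for y
  define g where "g x = m x * (f x)\<^sup>2" for x
  have XP: "X y \<in> D" "graph_path b (P y) (X y) y" "path_length b (P y) \<le> L" if "y \<notin> D" for y
    using Z[OF that] unfolding X_def P_def by auto
  have g0: "0 \<le> g x" for x unfolding g_def by (rule l2f_nn)
  have gU: "g summable_on UNIV" using f unfolding l2f_def g_def by simp
  have gD: "g summable_on D" by (rule summable_on_subset[OF gU subset_UNIV])
  have gND: "g summable_on (- D)" by (rule summable_on_subset[OF gU subset_UNIV])
  define a1 where "a1 = 2 * Mm * C * L"
  define a2 where "a2 = 2 * Mm * K * L"
  have a1nn: "0 \<le> a1" unfolding a1_def using Mm_pos Cpos Lpos by simp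
  have a2nn: "0 \<le> a2" unfolding a2_def using Mm_pos Lpos by simp
  have reachP: "y \<in> reach heavy K (P y ! j)" if "y \<notin> D" "j \<le> n y" for y j
  proof -
    note pf = path_facts[OF that(1) XP[OF that(1)]]
    have "P y ! n y \<in> reach heavy (n y - j) (P y ! j)"
      by (rule path_reach[OF pf(6)]) (use that pf(1) in \<open>auto simp: n_def\<close>)
    moreover have "reach heavy (n y - j) (P y ! j) \<subseteq> reach heavy K (P y ! j)"
      by (rule reach_mono) (use pf(2) in \<open>simp add: n_def\<close>)
    ultimately show ?thesis using pf(4) unfolding n_def by auto
  qed
  have fin_bound: "(\<Sum>y\<in>S. g y) \<le> a1 * (Pc * (\<Sum>\<^sub>\<infinity>x\<in>D. g x)) + a2 * (real (Pc * K) * Q f)"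
    if S: "finite S" "S \<subseteq> - D" for S
  proof -
    have "(\<Sum>y\<in>S. g y) \<le> (\<Sum>y\<in>S. a1 * g (X y) + a2 * (\<Sum>j<n y. T f (P y ! j) (P y ! Suc j)))"
    proof (rule sum_mono)
      fix y assume "y \<in> S"
      then have "y \<notin> D" using S by auto
      from point_bound[OF this XP[OF this], of f]
      show "g y \<le> a1 * g (X y) + a2 * (\<Sum>j<n y. T f (P y ! j) (P y ! Suc j))"
        unfolding g_def a1_def a2_def n_def .
    qed
    also have "\<dots> = a1 * (\<Sum>y\<in>S. g (X y)) + a2 * (\<Sum>y\<in>S. \<Sum>j<n y. T f (P y ! j) (P y ! Suc j))"
      by (simp add: sum.distrib sum_distrib_left)
    also have "(\<Sum>y\<in>S. g (X y)) \<le> Pc * (\<Sum>\<^sub>\<infinity>x\<in>D. g x)"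
    proof -
      have "(\<Sum>y\<in>S. g (X y)) \<le> Pc * (\<Sum>x\<in>X ` S. g x)"
      proof (rule sum_fiber_le[OF S(1)])
        show "0 \<le> g (X y)" for y by (rule g0)
        fix x assume "x \<in> X ` S"
        have "{y\<in>S. X y = x} \<subseteq> reach heavy K x"
        proof
          fix y assume y: "y \<in> {y\<in>S. X y = x}"
          then have yD: "y \<notin> D" using S by auto
          have "y \<in> reach heavy K (P y ! 0)" by (rule reachP[OF yD]) simp
          moreover have "P y ! 0 = x"
            using path_facts(3)[OF yD XP[OF yD]] y by simp
          ultimately show "y \<in> reach heavy K x" by simp
        qed
        then have "card {y\<in>S. X y = x} \<le> card (reach heavy K x)"
          using reachK by (intro card_mono) auto
        also have "\<dots> \<le> Pc" using reachK by blast
        finally show "card {y\<in>S. X y = x} \<le> Pc" .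
      qed
      also have "(\<Sum>x\<in>X ` S. g x) \<le> (\<Sum>\<^sub>\<infinity>x\<in>D. g x)"
        by (rule finite_sum_le_infsum[OF gD]) (use S XP g0 in auto)
      then have "Pc * (\<Sum>x\<in>X ` S. g x) \<le> Pc * (\<Sum>\<^sub>\<infinity>x\<in>D. g x)"
        by (rule mult_left_mono) simp
      finally show ?thesis .
    qed
    moreover have "(\<Sum>y\<in>S. \<Sum>j<n y. T f (P y ! j) (P y ! Suc j)) \<le> real (Pc * K) * Q f"
    proof -
      define W where "W = Sigma S (\<lambda>y. {..<n y})"
      define h where "h w = (P (fst w) ! snd w, P (fst w) ! Suc (snd w))" for w
      define G where "G = (\<lambda>(u,v). T f u v)"
      have finW: "finite W" unfolding W_def using S(1) by auto
      have "(\<Sum>y\<in>S. \<Sum>j<n y. T f (P y ! j) (P y ! Suc j)) = (\<Sum>w\<in>W. G (h w))"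
        unfolding W_def G_def h_def by (subst sum.Sigma) (use S(1) in \<open>auto simp: case_prod_unfold\<close>)
      also have "\<dots> \<le> (Pc * K) * (\<Sum>e\<in>h ` W. G e)"
      proof (rule sum_fiber_le[OF finW])
        show "0 \<le> G (h w)" for w by (simp add: G_def case_prod_unfold T_nn)
        fix e assume e: "e \<in> h ` W"
        obtain u v where uv: "e = (u, v)" by fastforce
        have "{w\<in>W. h w = e} \<subseteq> reach heavy K u \<times> {..<K}"
        proof
          fix w assume w: "w \<in> {w\<in>W. h w = e}"
          obtain y j where yj: "w = (y, j)" by fastforce
          have yS: "y \<in> S" and jn: "j < n y" using w yj unfolding W_def by auto
          have yD: "y \<notin> D" using yS S by auto
          have "y \<in> reach heavy K (P y ! j)" by (rule reachP[OF yD]) (use jn in simp)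
          moreover have "P y ! j = u" using w yj uv unfolding h_def by simp
          moreover have "j < K" using jn path_facts(2)[OF yD XP[OF yD]] unfolding n_def by simp
          ultimately show "w \<in> reach heavy K u \<times> {..<K}" using yj by simp
        qed
        then have "card {w\<in>W. h w = e} \<le> card (reach heavy K u \<times> {..<K})"
          using reachK by (intro card_mono) auto
        also have "\<dots> = card (reach heavy K u) * K" by (simp add: card_cartesian_product)
        also have "\<dots> \<le> Pc * K" using reachK by (intro mult_right_mono) auto
        finally show "card {w\<in>W. h w = e} \<le> Pc * K" .
      qed
      also have "(\<Sum>e\<in>h ` W. G e) \<le> Q f"
        unfolding Q_def G_def
        by (rule finite_sum_le_infsum[OF T_summable[OF f]]) (use finW in \<open>auto simp: T_nn\<close>)
      then have "real (Pc * K) * (\<Sum>e\<in>h ` W. G e) \<le> real (Pc * K) * Q f"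
        by (rule mult_left_mono) simp
      finally show ?thesis .
    qed
    ultimately show ?thesis
      using a1nn a2nn by (smt (verit) mult_left_mono)
  qed
  have ND: "(\<Sum>\<^sub>\<infinity>x\<in>-D. g x) \<le> a1 * (Pc * (\<Sum>\<^sub>\<infinity>x\<in>D. g x)) + a2 * (real (Pc * K) * Q f)"
    by (rule infsum_le_finite_sums[OF gND]) (rule fin_bound)
  have "(\<Sum>\<^sub>\<infinity>x. g x) = (\<Sum>\<^sub>\<infinity>x\<in>D \<union> -D. g x)" by simp
  also have "\<dots> = (\<Sum>\<^sub>\<infinity>x\<in>D. g x) + (\<Sum>\<^sub>\<infinity>x\<in>-D. g x)"
    by (rule infsum_Un_disjoint[OF gD gND]) auto
  finally have "(\<Sum>\<^sub>\<infinity>x. g x) \<le> (\<Sum>\<^sub>\<infinity>x\<in>D. g x) + (a1 * (Pc * (\<Sum>\<^sub>\<infinity>x\<in>D. g x)) + a2 * (real (Pc * K) * Q f))"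
    using ND by linarith
  then show ?thesis unfolding g_def a1_def a2_def by (simp add: algebra_simps)
qed

end


context wgraph
begin

definition Phi :: "('x \<Rightarrow> real) \<Rightarrow> 'x ell2" where
  "Phi f = Ell2 (\<lambda>x. sqrt (m x) * f x)"

definition Psi :: "'x ell2 \<Rightarrow> ('x \<Rightarrow> real)" where
  "Psi g = (\<lambda>x. ell2_fun g x / sqrt (m x))"

lemma sqrt_m_pos: "sqrt (m x) > 0" using mpos[of x] by simp

lemma m_ne [simp]: "m x \<noteq> 0" using mpos[of x] by simp

lemma sqrt_m_ne [simp]: "sqrt (m x) \<noteq> 0" using sqrt_m_pos[of x] by simp

lemma Phi_rep: "l2f f \<Longrightarrow> ell2_fun (Phi f) = (\<lambda>x. sqrt (m x) * f x)"
  unfolding Phi_def by (rule Ell2_inverse) (simp add: l2f_iff)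

lemma l2f_Psi: "l2f (Psi g)"
proof -
  have e: "sqrt (m x) * Psi g x = ell2_fun g x" for x
    by (simp add: Psi_def)
  show ?thesis unfolding l2f_iff e by (rule ell2_summable_UNIV)
qed

lemma Psi_Phi: "l2f f \<Longrightarrow> Psi (Phi f) = f"
  by (auto simp: Psi_def Phi_rep intro!: ext)

lemma Phi_Psi: "Phi (Psi g) = g"
proof -
  have "(\<lambda>x. sqrt (m x) * Psi g x) = ell2_fun g"
    by (auto simp: Psi_def intro!: ext)
  then show ?thesis unfolding Phi_def by (simp add: ell2_fun_inverse)
qed

lemma norm_Phi: "l2f f \<Longrightarrow> norm (Phi f) = l2norm UNIV m f"
proof -
  assume f: "l2f f"
  have "(\<lambda>i. (ell2_fun (Phi f) i)\<^sup>2) = (\<lambda>x. m x * (f x)\<^sup>2)"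
    using mpos by (auto simp: Phi_rep[OF f] power_mult_distrib intro!: ext less_imp_le)
  then show ?thesis by (simp add: norm_ell2_eq l2norm_def)
qed

lemma l2norm_Psi: "l2norm UNIV m (Psi g) = norm g"
  using norm_Phi[OF l2f_Psi[of g]] by (simp add: Phi_Psi)

lemma Psi_lin: "Psi (a *\<^sub>R g + h) = (\<lambda>x. a * Psi g x + Psi h x)"
  by (auto simp: Psi_def ell2_plus_apply ell2_scaleR_apply add_divide_distrib intro!: ext)

lemma Psi_diff: "Psi (g - h) = (\<lambda>x. Psi g x - Psi h x)"
  by (auto simp: Psi_def ell2_minus_apply diff_divide_distrib intro!: ext)

lemma Psi_divR: "Psi (g /\<^sub>R t) = (\<lambda>x. Psi g x / t)"
  by (auto simp: Psi_def ell2_scaleR_apply divide_inverse inverse_mult_distrib mult_ac intro!: ext)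

lemma Phi_lin:
  assumes "l2f f" "l2f g" shows "Phi (\<lambda>x. a * f x + g x) = a *\<^sub>R Phi f + Phi g"
proof -
  have "ell2_fun (Phi (\<lambda>x. a * f x + g x)) = ell2_fun (a *\<^sub>R Phi f + Phi g)"
    using Phi_rep[OF l2f_lin[OF assms]] Phi_rep[OF assms(1)] Phi_rep[OF assms(2)]
    by (auto simp: ell2_plus_apply ell2_scaleR_apply algebra_simps intro!: ext)
  then show ?thesis by (simp add: ell2_fun_inject)
qed

lemma l2f_prod_summable:
  assumes "l2f f" "l2f h" shows "(\<lambda>x. m x * h x * f x) summable_on UNIV"
proof -
  have "(\<lambda>x. (sqrt (m x) * h x) * (sqrt (m x) * f x)) summable_on UNIV"
    using assms unfolding l2f_iff by (intro sq_summable_prod)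
  moreover have "(\<lambda>x. (sqrt (m x) * h x) * (sqrt (m x) * f x)) = (\<lambda>x. m x * h x * f x)"
    using mpos by (auto intro!: ext simp: algebra_simps less_imp_le)
  ultimately show ?thesis by simp
qed

lemma inner_Phi:
  assumes "l2f f" "l2f h" shows "inner (Phi h) (Phi f) = (\<Sum>\<^sub>\<infinity>x. m x * h x * f x)"
proof -
  have "(\<lambda>x. (sqrt (m x) * h x) * (sqrt (m x) * f x)) = (\<lambda>x. m x * h x * f x)"
    using mpos by (auto intro!: ext simp: algebra_simps less_imp_le)
  then show ?thesis by (simp add: inner_ell2_eq Phi_rep assms)
qed

lemma l2_iff: "f \<in> l2 UNIV m \<longleftrightarrow> l2f f"
  by (simp add: l2_def l2f_def)

end

context wgraph_dense
begin

definition Fop :: "('x \<Rightarrow> real) \<Rightarrow> ('x \<Rightarrow> real)" where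
  "Fop f = (\<lambda>x. if x \<in> D then - f x else 0)"

definition Af :: "('x \<Rightarrow> real) \<Rightarrow> ('x \<Rightarrow> real)" where
  "Af f = (\<lambda>x. - laplacian b m f x + ext_zero D (Fop f) x)"

lemma ext_Fop: "ext_zero D (Fop f) = Fop f"
  by (auto simp: ext_zero_def Fop_def)

lemma Af_eq: "Af f = (\<lambda>x. (-1) * laplacian b m f x + Fop f x)"
  by (simp add: Af_def ext_Fop)

lemma Fop_sq_le: "m x * (Fop f x)\<^sup>2 \<le> m x * (f x)\<^sup>2"
  using l2f_nn[of x f] by (simp add: Fop_def)

lemma l2f_Fop: "l2f f \<Longrightarrow> l2f (Fop f)"
  unfolding l2f_def
  by (rule summable_on_comparison_test[where f="\<lambda>x. m x * (f x)\<^sup>2"]) (auto simp: Fop_sq_le l2f_nn)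

lemma Fop_lin: "Fop (\<lambda>x. a * f x + g x) = (\<lambda>x. a * Fop f x + Fop g x)"
  by (auto simp: Fop_def intro!: ext)

lemma l2f_Af: "l2f f \<Longrightarrow> l2f (Af f)"
  unfolding Af_eq by (intro l2f_lin lap_l2(1) l2f_Fop)

lemma Af_lin:
  assumes "l2f f" "l2f g" shows "Af (\<lambda>x. a * f x + g x) = (\<lambda>x. a * Af f x + Af g x)"
proof (rule ext)
  fix x
  show "Af (\<lambda>x. a * f x + g x) x = a * Af f x + Af g x"
    unfolding Af_eq Fop_lin by (simp only: lap_lin[OF assms]) (simp add: algebra_simps)
qed

lemma Af_bound:
  assumes f: "l2f f" shows "norm (Phi (Af f)) \<le> (2 * C + 1) * norm (Phi f)"
proof -
  define N2 where "N2 = (\<Sum>\<^sub>\<infinity>x. m x * (f x)\<^sup>2)"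
  have N0: "0 \<le> N2" unfolding N2_def by (rule infsum_nonneg) (simp add: l2f_nn)
  have nf: "norm (Phi f) = sqrt N2" using norm_Phi[OF f] by (simp add: l2norm_def N2_def)
  have "(\<Sum>\<^sub>\<infinity>x. m x * (laplacian b m f x)\<^sup>2) \<le> C * Q f" by (rule lap_l2(2)[OF f])
  also have "\<dots> \<le> C * (4 * C * N2)" using Q_le[OF f] Cpos unfolding N2_def by simp
  also have "\<dots> = (2 * C)\<^sup>2 * N2" by (simp add: power2_eq_square)
  finally have "sqrt (\<Sum>\<^sub>\<infinity>x. m x * (laplacian b m f x)\<^sup>2) \<le> sqrt ((2 * C)\<^sup>2 * N2)"
    by (rule real_sqrt_le_mono)
  also have "\<dots> = 2 * C * sqrt N2" using Cpos by (simp add: real_sqrt_mult)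
  finally have n1: "norm (Phi (laplacian b m f)) \<le> 2 * C * sqrt N2"
    using norm_Phi[OF lap_l2(1)[OF f]] by (simp add: l2norm_def)
  have "(\<Sum>\<^sub>\<infinity>x. m x * (Fop f x)\<^sup>2) \<le> N2"
    unfolding N2_def
    by (rule infsum_mono[OF l2f_Fop[OF f, unfolded l2f_def] f[unfolded l2f_def]]) (rule Fop_sq_le)
  then have n2: "norm (Phi (Fop f)) \<le> sqrt N2"
    using norm_Phi[OF l2f_Fop[OF f]] by (simp add: l2norm_def)
  have "Phi (Af f) = (-1) *\<^sub>R Phi (laplacian b m f) + Phi (Fop f)"
    unfolding Af_eq by (rule Phi_lin[OF lap_l2(1)[OF f] l2f_Fop[OF f]])
  then have "norm (Phi (Af f)) \<le> norm (Phi (laplacian b m f)) + norm (Phi (Fop f))"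
    using norm_triangle_ineq[of "(-1) *\<^sub>R Phi (laplacian b m f)" "Phi (Fop f)"] by simp
  also have "\<dots> \<le> 2 * C * sqrt N2 + sqrt N2" using n1 n2 by simp
  also have "\<dots> = (2 * C + 1) * norm (Phi f)" using nf by (simp add: algebra_simps)
  finally show ?thesis .
qed

definition Aop :: "'x ell2 \<Rightarrow> 'x ell2" where
  "Aop g = Phi (Af (Psi g))"

lemma Aop_lin: "Aop (a *\<^sub>R g + h) = a *\<^sub>R Aop g + Aop h"
  unfolding Aop_def Psi_lin Af_lin[OF l2f_Psi l2f_Psi]
  by (rule Phi_lin[OF l2f_Af[OF l2f_Psi] l2f_Af[OF l2f_Psi]])

lemma Aop_zero: "Aop 0 = 0"
proof -
  have "Aop 0 = Aop (0 *\<^sub>R 0 + 0)" by simp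
  also have "\<dots> = 0 *\<^sub>R Aop 0 + Aop 0" by (rule Aop_lin)
  finally have "Aop 0 = Aop 0 + 0" by simp
  have "Aop (1 *\<^sub>R 0 + 0) = 1 *\<^sub>R Aop 0 + Aop 0" by (rule Aop_lin)
  then have "Aop 0 = Aop 0 + Aop 0" by simp
  then show ?thesis by simp
qed

lemma Aop_bl: "bounded_linear Aop"
proof (rule bounded_linear_intro)
  show "Aop (g + h) = Aop g + Aop h" for g h
    using Aop_lin[of 1 g h] by simp
  show "Aop (r *\<^sub>R g) = r *\<^sub>R Aop g" for r g
    using Aop_lin[of r g 0] by (simp add: Aop_zero)
  show "norm (Aop g) \<le> norm g * (2 * C + 1)" for g
    using Af_bound[OF l2f_Psi[of g]] by (simp add: Aop_def Phi_Psi mult.commute)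
qed

definition "Aop_b = Bop (Blinfun Aop)"

lemma bapp_A: "bapp Aop_b g = Aop g"
  unfolding Aop_b_def by (rule bapp_Bop[OF Aop_bl])

definition "c1 = 1 + 2 * Mm * C * L * Pc"
definition "c2 = 2 * Mm * K * L * (Pc * K)"
definition "\<delta> = 1 / (c1 + 2 * c2 + 1)"

lemma c_nn: "0 \<le> c1" "0 \<le> c2"
  unfolding c1_def c2_def using Mm_pos Cpos Lpos by simp_all

lemma delta_pos: "\<delta> > 0"
  unfolding \<delta>_def using c_nn by simp

lemma Fop_energy:
  assumes f: "l2f f"
  shows "(\<Sum>\<^sub>\<infinity>x. m x * Fop f x * f x) = - (\<Sum>\<^sub>\<infinity>x\<in>D. m x * (f x)\<^sup>2)"
proof -
  have "(\<Sum>\<^sub>\<infinity>x. m x * Fop f x * f x) = (\<Sum>\<^sub>\<infinity>x\<in>D. - (m x * (f x)\<^sup>2))"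
    by (rule infsum_cong_neutral) (auto simp: Fop_def power2_eq_square)
  also have "\<dots> = - (\<Sum>\<^sub>\<infinity>x\<in>D. m x * (f x)\<^sup>2)" by (rule infsum_uminus)
  finally show ?thesis .
qed

lemma diss: "inner (bapp Aop_b g) g \<le> - \<delta> * (norm g)\<^sup>2"
proof -
  define f where "f = Psi g"
  have f: "l2f f" unfolding f_def by (rule l2f_Psi)
  have g: "g = Phi f" unfolding f_def by (simp add: Phi_Psi)
  define N2 where "N2 = (\<Sum>\<^sub>\<infinity>x. m x * (f x)\<^sup>2)"
  define SD where "SD = (\<Sum>\<^sub>\<infinity>x\<in>D. m x * (f x)\<^sup>2)"
  have N0: "0 \<le> N2" unfolding N2_def by (rule infsum_nonneg) (simp add: l2f_nn)
  have SD0: "0 \<le> SD" unfolding SD_def by (rule infsum_nonneg) (simp add: l2f_nn)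
  have Q0: "0 \<le> Q f" by (rule Q_nn)
  have ng: "(norm g)\<^sup>2 = N2"
    using norm_Phi[OF f] N0 unfolding g by (simp add: l2norm_def N2_def)
  have "inner (bapp Aop_b g) g = inner (Phi (Af f)) (Phi f)"
    by (simp add: bapp_A Aop_def f_def Phi_Psi)
  also have "\<dots> = (\<Sum>\<^sub>\<infinity>x. m x * Af f x * f x)"
    by (rule inner_Phi[OF f l2f_Af[OF f]])
  also have "\<dots> = (\<Sum>\<^sub>\<infinity>x. m x * Fop f x * f x - m x * laplacian b m f x * f x)"
    by (rule infsum_cong) (simp add: Af_eq algebra_simps)
  also have "\<dots> = (\<Sum>\<^sub>\<infinity>x. m x * Fop f x * f x) - (\<Sum>\<^sub>\<infinity>x. m x * laplacian b m f x * f x)"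
    by (rule infsum_diff_real[OF l2f_prod_summable[OF f l2f_Fop[OF f]]
          l2f_prod_summable[OF f lap_l2(1)[OF f]]])
  also have "\<dots> = - SD - Q f / 2"
    unfolding SD_def by (simp add: Fop_energy[OF f] energy[OF f])
  finally have e: "inner (bapp Aop_b g) g = - SD - Q f / 2" .
  have gp: "N2 \<le> c1 * SD + c2 * Q f"
    using gap[OF f] unfolding N2_def SD_def c1_def c2_def by simp
  define d where "d = c1 + 2 * c2 + 1"
  have dpos: "d > 0" unfolding d_def using c_nn by simp
  have "c1 * SD \<le> d * SD" by (rule mult_right_mono[OF _ SD0]) (use c_nn in \<open>simp add: d_def\<close>)
  moreover have "c2 * Q f \<le> (d / 2) * Q f" by (rule mult_right_mono[OF _ Q0]) (use c_nn in \<open>simp add: d_def\<close>)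
  ultimately have "N2 \<le> d * (SD + Q f / 2)" using gp by (simp add: algebra_simps)
  then have "N2 / d \<le> SD + Q f / 2" using dpos by (simp add: pos_divide_le_eq mult.commute)
  moreover have "\<delta> * N2 = N2 / d" unfolding \<delta>_def d_def by simp
  ultimately show ?thesis using e ng by simp
qed

definition Sg :: "real \<Rightarrow> ('x \<Rightarrow> real) \<Rightarrow> ('x \<Rightarrow> real)" where
  "Sg t f = Psi (bapp (exp (t *\<^sub>R Aop_b)) (Phi f))"

lemma Fop_blo: "bounded_linear_op UNIV D m Fop"
  unfolding bounded_linear_op_def
proof (intro conjI ballI allI exI[of _ 1])
  fix f assume "f \<in> l2 UNIV m"
  then have f: "l2f f" by (simp add: l2_iff)
  have sU: "(\<lambda>x. m x * (Fop f x)\<^sup>2) summable_on UNIV" using l2f_Fop[OF f] by (simp add: l2f_def)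
  have sD: "(\<lambda>x. m x * (Fop f x)\<^sup>2) summable_on D" by (rule summable_on_subset[OF sU subset_UNIV])
  show "Fop f \<in> l2 D m" unfolding l2_def using sD by (auto simp: Fop_def)
  have "(\<Sum>\<^sub>\<infinity>x\<in>D. m x * (Fop f x)\<^sup>2) \<le> (\<Sum>\<^sub>\<infinity>x\<in>UNIV. m x * (f x)\<^sup>2)"
    by (rule infsum_mono_neutral[OF sD f[unfolded l2f_def]]) (auto simp: Fop_sq_le l2f_nn)
  then show "l2norm D m (Fop f) \<le> 1 * l2norm UNIV m f"
    unfolding l2norm_def by (simp add: real_sqrt_le_mono)
next
  fix f g :: "'x \<Rightarrow> real" and a :: real
  show "Fop (\<lambda>x. a * f x + g x) = (\<lambda>x. a * Fop f x + Fop g x)" by (rule Fop_lin)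
qed

lemma Af_lambda: "(\<lambda>f x. - laplacian b m f x + ext_zero D (Fop f) x) = Af"
  by (auto simp: Af_def intro!: ext)

lemma Sg_l2norm: "l2norm UNIV m (Sg t f) = norm (bapp (exp (t *\<^sub>R Aop_b)) (Phi f))"
  unfolding Sg_def by (rule l2norm_Psi)

lemma Sg_blo: "bounded_linear_op UNIV UNIV m (Sg t)"
  unfolding bounded_linear_op_def
proof (intro conjI ballI allI exI[of _ "norm (exp (t *\<^sub>R Aop_b))"])
  fix f assume "f \<in> l2 UNIV m"
  then have f: "l2f f" by (simp add: l2_iff)
  show "Sg t f \<in> l2 UNIV m" unfolding Sg_def l2_iff by (rule l2f_Psi)
  show "l2norm UNIV m (Sg t f) \<le> norm (exp (t *\<^sub>R Aop_b)) * l2norm UNIV m f"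
    unfolding Sg_l2norm norm_Phi[OF f, symmetric] by (rule bapp_norm)
next
  fix f g a assume "f \<in> l2 UNIV m" "g \<in> l2 UNIV m"
  then have f: "l2f f" and g: "l2f g" by (simp_all add: l2_iff)
  show "Sg t (\<lambda>x. a * f x + g x) = (\<lambda>x. a * Sg t f x + Sg t g x)"
    unfolding Sg_def Phi_lin[OF f g] bapp_lin_arg Psi_lin ..
qed

lemma Sg_zero: "l2f f \<Longrightarrow> Sg 0 f = f"
  by (simp add: Sg_def bapp_one Psi_Phi)

lemma Sg_add: "Sg (t + s) f = Sg t (Sg s f)"
  by (simp add: Sg_def exp_scaleR_add bapp_mult Phi_Psi)

lemma Sg_cont:
  assumes f: "l2f f"
  shows "((\<lambda>t. l2norm UNIV m (\<lambda>x. Sg t f x - f x)) \<longlongrightarrow> 0) (at_right 0)"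
proof -
  have "(\<lambda>x. Sg t f x - f x) = Psi (bapp (exp (t *\<^sub>R Aop_b)) (Phi f) - Phi f)" for t
    unfolding Psi_diff Sg_def Psi_Phi[OF f] ..
  then have "(\<lambda>t. l2norm UNIV m (\<lambda>x. Sg t f x - f x)) = (\<lambda>t. norm (bapp (exp (t *\<^sub>R Aop_b)) (Phi f) - Phi f))"
    by (simp add: l2norm_Psi)
  then show ?thesis using semigroup_strong_cont[of Aop_b "Phi f"] by simp
qed

lemma Sg_gen:
  assumes f: "l2f f"
  shows "((\<lambda>t. l2norm UNIV m (\<lambda>x. (Sg t f x - f x) / t - Af f x)) \<longlongrightarrow> 0) (at_right 0)"
proof -
  have AP: "Psi (bapp Aop_b (Phi f)) = Af f"
    by (simp add: bapp_A Aop_def Psi_Phi[OF f] Psi_Phi[OF l2f_Af[OF f]])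
  have "(\<lambda>x. (Sg t f x - f x) / t - Af f x)
      = Psi ((bapp (exp (t *\<^sub>R Aop_b)) (Phi f) - Phi f) /\<^sub>R t - bapp Aop_b (Phi f))" for t
    unfolding Psi_diff Psi_divR AP Sg_def Psi_Phi[OF f] ..
  then have "(\<lambda>t. l2norm UNIV m (\<lambda>x. (Sg t f x - f x) / t - Af f x))
      = (\<lambda>t. norm ((bapp (exp (t *\<^sub>R Aop_b)) (Phi f) - Phi f) /\<^sub>R t - bapp Aop_b (Phi f)))"
    by (simp add: l2norm_Psi)
  then show ?thesis using semigroup_generator[of Aop_b "Phi f"] by simp
qed

lemma Sg_decay:
  assumes f: "l2f f" and t: "t \<ge> 0"
  shows "l2norm UNIV m (Sg t f) \<le> 1 * exp ((- \<delta>) * t) * l2norm UNIV m f"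
  using semigroup_decay[of Aop_b \<delta> t "Phi f", OF diss t]
  by (simp add: Sg_l2norm norm_Phi[OF f])

lemma main_result:
  shows "\<exists>F. bounded_linear_op UNIV D m F \<and>
           (\<exists>S. generates m (\<lambda>f x. - laplacian b m f x + ext_zero D (F f) x) S \<and>
              (\<exists>M \<omega>. M \<ge> 1 \<and> \<omega> < 0 \<and>
                 (\<forall>t\<ge>0. \<forall>f\<in>l2 UNIV m. l2norm UNIV m (S t f) \<le> M * exp (\<omega> * t) * l2norm UNIV m f)))"
proof (intro exI conjI)
  show "bounded_linear_op UNIV D m Fop" by (rule Fop_blo)
  show "generates m (\<lambda>f x. - laplacian b m f x + ext_zero D (Fop f) x) Sg"
    unfolding Af_lambda generates_def C0_semigroup_def
    by (auto simp: Sg_blo Sg_zero Sg_add Sg_cont Sg_gen l2_iff)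
  show "(1::real) \<ge> 1" by simp
  show "- \<delta> < 0" using delta_pos by simp
  show "\<forall>t\<ge>0. \<forall>f\<in>l2 UNIV m. l2norm UNIV m (Sg t f) \<le> 1 * exp (- \<delta> * t) * l2norm UNIV m f"
  proof (intro allI impI ballI)
    fix t :: real and f assume "0 \<le> t" "f \<in> l2 UNIV m"
    then show "l2norm UNIV m (Sg t f) \<le> 1 * exp (- \<delta> * t) * l2norm UNIV m f"
      using Sg_decay[of f t] by (simp add: l2_iff)
  qed
qed

end


theorem mainTheorem7:
  fixes b :: "'x::countable \<Rightarrow> 'x \<Rightarrow> real" and m :: "'x \<Rightarrow> real" and D :: "'x set"
  assumes "weighted_graph b m"
    and "connected_graph b"
    and "bounded_degree b m"
    and "bounded_measure m"
    and "D \<noteq> UNIV"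
    and "relatively_dense b D"
  shows "\<exists>F. bounded_linear_op UNIV D m F \<and>
           (\<exists>S. generates m (\<lambda>f x. - laplacian b m f x + ext_zero D (F f) x) S \<and>
              (\<exists>M \<omega>. M \<ge> 1 \<and> \<omega> < 0 \<and>
                 (\<forall>t\<ge>0. \<forall>f\<in>l2 UNIV m. l2norm UNIV m (S t f) \<le> M * exp (\<omega> * t) * l2norm UNIV m f)))"
proof -
  have mpos: "\<And>x. m x > 0" and bsym: "\<And>x y. b x y = b y x" and bnn: "\<And>x y. 0 \<le> b x y"
    and bsum: "\<And>x. b x summable_on UNIV"
    using assms(1) unfolding weighted_graph_def by auto
  obtain C0 where C0: "\<And>x. (1 / m x) * (\<Sum>\<^sub>\<infinity>y. b x y) \<le> C0"
    using assms(3) unfolding bounded_degree_def by blast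
  define C where "C = max C0 1"
  have Cpos: "C > 0" unfolding C_def by simp
  have degC: "(\<Sum>\<^sub>\<infinity>y. b x y) \<le> C * m x" for x
  proof -
    have "(1 / m x) * (\<Sum>\<^sub>\<infinity>y. b x y) \<le> C" using C0[of x] unfolding C_def by simp
    then show ?thesis using mpos[of x] by (simp add: field_simps)
  qed
  obtain Mm where mbd: "\<And>x. m x \<le> Mm"
    using assms(4) unfolding bounded_measure_def by blast
  obtain R where Rpos: "R > 0" and RU: "(\<Union>x\<in>D. {y. dL b x y \<le> R}) = UNIV"
    using assms(6) unfolding relatively_dense_def by blast
  define L where "L = R + 1"
  have Lpos: "L > 0" unfolding L_def using Rpos by simp
  have paths: "\<exists>x\<in>D. \<exists>p. graph_path b p x y \<and> path_length b p \<le> L" if "y \<notin> D" for y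
  proof -
    have "y \<in> (\<Union>x\<in>D. {y. dL b x y \<le> R})" using RU by simp
    then obtain x where x: "x \<in> D" "dL b x y \<le> R" by blast
    define PS where "PS = {path_length b p | p. graph_path b p x y}"
    have ne: "PS \<noteq> {}"
      using assms(2) unfolding connected_graph_def PS_def by blast
    have bdd: "bdd_below PS"
    proof (rule bdd_belowI)
      fix v assume "v \<in> PS"
      then obtain p where "v = path_length b p" unfolding PS_def by blast
      then show "0 \<le> v" unfolding path_length_def by (simp add: sum_nonneg bnn)
    qed
    have "Inf PS < L" using x(2) unfolding dL_def PS_def L_def by simp
    then obtain v where "v \<in> PS" "v < L" using cInf_lessD[OF ne] by blast
    then obtain p where "graph_path b p x y" "path_length b p \<le> L"
      unfolding PS_def by force
    then show ?thesis using x(1) by blast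
  qed
  interpret wgraph_dense b m C D L Mm
    by unfold_locales (use mpos bsym bnn bsum degC Cpos Lpos mbd paths in auto)
  show ?thesis by (rule main_result)
qed


end
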